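(* Let $F$ be an algebraically closed field with $\operatorname{char}F>3$, $R=F[[x,y]]$, and let $f\in R^2$ be an isolated complete intersection singularity contact equivalent to $$(x^3+a(y)xy^r+b(y)y^s,\ x^2y+c(y)y^t),$$ where $r\ge 3$, $s\ge 4$, $t\ge 4$ and $a(y),b(y),c(y)\in F[[y]]$ are units. If $s=4$, then $f$ is contact equivalent to $(x^3+y^4,\,x^2y+\lambda y^4)$ for some $\lambda\in\{0,1\}$.
   Context: $\mathfrak m=\langle x,y\rangle$. ICIS: $f_1,f_2\in\mathfrak m$ a regular sequence with $\mathfrak m^k\subset\langle f_1,f_2\rangle+I_2(J(f))$ for some $k$. Contact equivalence: $g=U\cdot\phi(f)$ with $U\in GL(2,R)$, $\phi\in\operatorname{Aut}(R)$. *)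

theory Defs
  imports "HOL-Computational_Algebra.Computational_Algebra"
begin

text \<open>R = F[[x,y]] is modelled as F[[y]][[x]], i.e. the type 'a fps fps:
  the outer variable is x, the inner variable (coefficients) is y.\<close>

type_synonym 'a bips = "'a fps fps"

definition vx :: "'a::comm_ring_1 bips" where "vx = fps_X"
definition vy :: "'a::comm_ring_1 bips" where "vy = fps_const fps_X"

definition of_y :: "'a::comm_ring_1 fps \<Rightarrow> 'a bips" where "of_y a = fps_const a"
definition cst :: "'a::comm_ring_1 \<Rightarrow> 'a bips" where "cst c = fps_const (fps_const c)"

definition dx :: "'a::comm_ring_1 bips \<Rightarrow> 'a bips" where "dx f = fps_deriv f"
definition dy :: "'a::comm_ring_1 bips \<Rightarrow> 'a bips" where
  "dy f = Abs_fps (\<lambda>n. fps_deriv (f $ n))"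

definition in_max :: "'a::comm_ring_1 bips \<Rightarrow> bool" where
  "in_max h \<longleftrightarrow> h $ 0 $ 0 = 0"

definition ideal_gen :: "'a::comm_ring_1 bips set \<Rightarrow> 'a bips set" where
  "ideal_gen S = {(\<Sum>i<(n::nat). c i * s i) | n c s. \<forall>i<n. s i \<in> S}"

definition regular_seq :: "'a::comm_ring_1 bips \<Rightarrow> 'a bips \<Rightarrow> bool" where
  "regular_seq f1 f2 \<longleftrightarrow>
     ideal_gen {f1, f2} \<noteq> UNIV \<and>
     (\<forall>h. h * f1 = 0 \<longrightarrow> h = 0) \<and>
     (\<forall>h. h * f2 \<in> ideal_gen {f1} \<longrightarrow> h \<in> ideal_gen {f1})"

definition jac_det :: "'a::comm_ring_1 bips \<Rightarrow> 'a bips \<Rightarrow> 'a bips" where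
  "jac_det f1 f2 = dx f1 * dy f2 - dy f1 * dx f2"

text \<open>ICIS: f1,f2 in m, regular sequence, and m^k \<subseteq> <f1,f2> + I_2(J(f)) for some k
  (m^k is generated by the monomials x^i y^(k-i)).\<close>
definition ICIS :: "'a::comm_ring_1 bips \<times> 'a bips \<Rightarrow> bool" where
  "ICIS f \<longleftrightarrow> in_max (fst f) \<and> in_max (snd f) \<and> regular_seq (fst f) (snd f) \<and>
     (\<exists>k. \<forall>i\<le>k. vx ^ i * vy ^ (k - i) \<in> ideal_gen {fst f, snd f, jac_det (fst f) (snd f)})"

definition is_aut :: "('a::comm_ring_1 bips \<Rightarrow> 'a bips) \<Rightarrow> bool" where
  "is_aut \<phi> \<longleftrightarrow> bij \<phi> \<and> (\<forall>a b. \<phi> (a + b) = \<phi> a + \<phi> b) \<and>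
     (\<forall>a b. \<phi> (a * b) = \<phi> a * \<phi> b) \<and> (\<forall>c. \<phi> (cst c) = cst c)"

definition contact_equiv :: "'a::comm_ring_1 bips \<times> 'a bips \<Rightarrow> 'a bips \<times> 'a bips \<Rightarrow> bool" where
  "contact_equiv f g \<longleftrightarrow>
     (\<exists>u11 u12 u21 u22 \<phi>. (\<exists>w. (u11 * u22 - u12 * u21) * w = 1) \<and> is_aut \<phi> \<and>
        fst g = u11 * \<phi> (fst f) + u12 * \<phi> (snd f) \<and>
        snd g = u21 * \<phi> (fst f) + u22 * \<phi> (snd f))"

end

theory Submission
  imports Defs
begin


lemma vx_nth: "(vx :: 'a::comm_ring_1 bips) $ n = (if n = 1 then 1 else 0)"
  by (simp add: vx_def)

lemma vy_nth: "(vy :: 'a::comm_ring_1 bips) $ n = (if n = 0 then fps_X else 0)"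
  by (simp add: vy_def)

lemma cst_nth: "(cst c :: 'a::comm_ring_1 bips) $ n = (if n = 0 then fps_const c else 0)"
  by (simp add: cst_def)

lemma cst_add: "cst (a + b) = (cst a + cst b :: 'a::comm_ring_1 bips)"
  by (simp add: cst_def)
lemma cst_mult: "cst (a * b) = (cst a * cst b :: 'a::comm_ring_1 bips)"
  by (simp add: cst_def)
lemma cst_diff: "cst (a - b) = (cst a - cst b :: 'a::comm_ring_1 bips)"
  by (simp add: cst_def)
lemma cst_uminus: "cst (- a) = (- cst a :: 'a::comm_ring_1 bips)"
  by (simp add: cst_def)
lemma cst_power: "cst (a ^ n) = (cst a ^ n :: 'a::comm_ring_1 bips)"
  by (simp add: cst_def)
lemma cst_0: "cst 0 = (0 :: 'a::comm_ring_1 bips)"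
  by (simp add: cst_def)
lemma cst_1: "cst 1 = (1 :: 'a::comm_ring_1 bips)"
  by (simp add: cst_def)
lemma cst_numeral: "cst (numeral k) = (numeral k :: 'a::comm_ring_1 bips)"
  by (simp add: cst_def fps_numeral_fps_const)

lemmas cst_simps = cst_add cst_mult cst_diff cst_uminus cst_power cst_0 cst_1 cst_numeral

lemma mult_nth2:
  "((a::'a::comm_ring_1 bips) * b) $ n $ m = (\<Sum>i=0..n. \<Sum>j=0..m. a$i$j * b$(n-i)$(m-j))"
  by (simp add: fps_mult_nth fps_sum_nth)

definition ordge :: "nat \<Rightarrow> 'a::comm_ring_1 bips \<Rightarrow> bool" where
  "ordge k h \<longleftrightarrow> (\<forall>n m. n + m < k \<longrightarrow> h $ n $ m = 0)"

lemma ordge_0 [simp]: "ordge 0 h"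
  by (simp add: ordge_def)

lemma ordge_zero [simp]: "ordge k 0"
  by (simp add: ordge_def)

lemma ordge_mono: "ordge k h \<Longrightarrow> j \<le> k \<Longrightarrow> ordge j h"
  by (auto simp: ordge_def)

lemma ordge_add: "ordge k a \<Longrightarrow> ordge k b \<Longrightarrow> ordge k (a + b)"
  by (auto simp: ordge_def)

lemma ordge_uminus: "ordge k a \<Longrightarrow> ordge k (- a)"
  by (auto simp: ordge_def)

lemma ordge_diff: "ordge k a \<Longrightarrow> ordge k b \<Longrightarrow> ordge k (a - b)"
  by (auto simp: ordge_def)

lemma ordge_sum: "(\<And>i. i \<in> S \<Longrightarrow> ordge k (f i)) \<Longrightarrow> ordge k (sum f S)"
  by (induction S rule: infinite_finite_induct) (auto intro: ordge_add)

lemma ordge_mult: "ordge i a \<Longrightarrow> ordge j b \<Longrightarrow> ordge (i + j) (a * b)"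
  unfolding ordge_def
proof (intro allI impI)
  fix n m assume a: "\<forall>n m. n + m < i \<longrightarrow> a $ n $ m = 0" and b: "\<forall>n m. n + m < j \<longrightarrow> b $ n $ m = 0"
    and nm: "n + m < i + j"
  have "a$p$q * b$(n-p)$(m-q) = 0" if "p \<le> n" "q \<le> m" for p q
  proof (cases "p + q < i")
    case True then show ?thesis using a by simp
  next
    case False
    then have "(n-p) + (m-q) < j" using nm that by linarith
    then show ?thesis using b by simp
  qed
  then show "(a * b) $ n $ m = 0"
    by (simp add: mult_nth2)
qed

lemma ordge_mult_le: "ordge i a \<Longrightarrow> ordge j b \<Longrightarrow> k \<le> i + j \<Longrightarrow> ordge k (a * b)"
  using ordge_mono ordge_mult by blast

lemma ordge_multL: "ordge k b \<Longrightarrow> ordge k (a * b)"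
  using ordge_mult[of 0 a k b] by simp

lemma ordge_multR: "ordge k a \<Longrightarrow> ordge k (a * b)"
  using ordge_mult[of k a 0 b] by simp

lemma ordge_power: "ordge i a \<Longrightarrow> ordge (n * i) (a ^ n)"
proof (induction n)
  case 0 then show ?case by simp
next
  case (Suc n)
  then show ?case using ordge_mult[of i a "n*i" "a^n"] by (simp add: add.commute)
qed

lemma ordge_vx: "ordge 1 (vx :: 'a::comm_ring_1 bips)"
  by (auto simp: ordge_def vx_nth)

lemma ordge_vy: "ordge 1 (vy :: 'a::comm_ring_1 bips)"
  by (auto simp: ordge_def vy_nth)

lemma ordge_vx_Suc [simp]: "ordge (Suc 0) (vx :: 'a::comm_ring_1 bips)"
  using ordge_vx by simp

lemma ordge_vy_Suc [simp]: "ordge (Suc 0) (vy :: 'a::comm_ring_1 bips)"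
  using ordge_vy by simp

lemma ordge_xy: "k \<le> i + j \<Longrightarrow> ordge k ((vx :: 'a::comm_ring_1 bips) ^ i * vy ^ j * c)"
  apply (rule ordge_multR)
  apply (rule ordge_mult_le[OF ordge_power[OF ordge_vx] ordge_power[OF ordge_vy]])
  by simp

lemma ordge_all: "(\<And>k. ordge k h) \<Longrightarrow> h = 0"
proof -
  assume h: "\<And>k. ordge k h"
  show "h = 0"
  proof (rule fps_ext, rule fps_ext)
    fix n m show "h $ n $ m = 0 $ n $ m" using h[of "Suc (n+m)"] by (simp add: ordge_def)
  qed
qed

lemma in_max_ordge: "in_max h \<longleftrightarrow> ordge 1 h"
  by (simp add: in_max_def ordge_def)



lemma ordge_decomp:
  fixes h :: "'a::comm_ring_1 bips"
  assumes "ordge (Suc k) h"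
  shows "\<exists>h1 h2. h = vx * h1 + vy * h2 \<and> ordge k h1 \<and> ordge k h2"
proof -
  define h1 where "h1 = fps_shift 1 h"
  define h2 where "h2 = (fps_const (fps_shift 1 (h $ 0)) :: 'a bips)"
  have h00: "h $ 0 $ 0 = 0" using assms by (simp add: ordge_def)
  have "h = vx * h1 + vy * h2"
  proof (rule fps_ext, rule fps_ext)
    fix n m
    show "h $ n $ m = (vx * h1 + vy * h2) $ n $ m"
      using h00 by (cases n; cases m) (simp_all add: vx_def vy_def h1_def h2_def)
  qed
  moreover have "ordge k h1" using assms by (auto simp: ordge_def h1_def)
  moreover have "ordge k h2" using assms by (auto simp: ordge_def h2_def)
  ultimately show ?thesis by blast
qed

definition hom :: "('a::comm_ring_1 bips \<Rightarrow> 'a bips) \<Rightarrow> bool" where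
  "hom \<phi> \<longleftrightarrow> (\<forall>a b. \<phi> (a + b) = \<phi> a + \<phi> b) \<and> (\<forall>a b. \<phi> (a * b) = \<phi> a * \<phi> b) \<and> (\<forall>c. \<phi> (cst c) = cst c)"

lemma homD:
  assumes "hom \<phi>"
  shows hom_add: "\<phi> (a + b) = \<phi> a + \<phi> b" and hom_mult: "\<phi> (a * b) = \<phi> a * \<phi> b"
    and hom_cst: "\<phi> (cst c) = cst c"
  using assms by (auto simp: hom_def)

lemma hom_0: "hom \<phi> \<Longrightarrow> \<phi> 0 = 0"
  using hom_add[of \<phi> 0 0] by simp

lemma hom_1: "hom \<phi> \<Longrightarrow> \<phi> 1 = 1"
  using hom_cst[of \<phi> 1] by (simp add: cst_1)

lemma hom_uminus: "hom \<phi> \<Longrightarrow> \<phi> (- a) = - \<phi> a"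
  using hom_add[of \<phi> a "-a"] hom_0[of \<phi>] by (metis neg_eq_iff_add_eq_0 add.right_inverse)

lemma hom_diff: "hom \<phi> \<Longrightarrow> \<phi> (a - b) = \<phi> a - \<phi> b"
  using hom_add[of \<phi> a "-b"] hom_uminus[of \<phi> b] by simp

lemma hom_power: "hom \<phi> \<Longrightarrow> \<phi> (a ^ n) = \<phi> a ^ n"
  by (induction n) (simp_all add: hom_1 hom_mult)

lemma hom_sum: "hom \<phi> \<Longrightarrow> \<phi> (sum f S) = (\<Sum>i\<in>S. \<phi> (f i))"
  by (induction S rule: infinite_finite_induct) (simp_all add: hom_0 hom_add)

lemma hom_numeral: "hom \<phi> \<Longrightarrow> \<phi> (numeral k) = numeral k"
  using hom_cst[of \<phi> "numeral k"] by (simp add: cst_numeral)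

lemma hom_comp: "hom \<phi> \<Longrightarrow> hom \<psi> \<Longrightarrow> hom (\<phi> \<circ> \<psi>)"
  by (simp add: hom_def)

lemma hom_id: "hom id"
  by (simp add: hom_def)

lemma hom_ordge:
  assumes "hom \<phi>" "ordge 1 (\<phi> vx)" "ordge 1 (\<phi> vy)"
  shows "ordge k h \<Longrightarrow> ordge k (\<phi> h)"
proof (induction k arbitrary: h)
  case 0 then show ?case by simp
next
  case (Suc k)
  then obtain h1 h2 where h: "h = vx * h1 + vy * h2" "ordge k h1" "ordge k h2"
    using ordge_decomp by blast
  have "\<phi> h = \<phi> vx * \<phi> h1 + \<phi> vy * \<phi> h2"
    using assms(1) by (simp add: h hom_add hom_mult)
  moreover have "ordge (Suc k) (\<phi> vx * \<phi> h1)"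
    using ordge_mult[OF assms(2) Suc.IH[OF h(2)]] by simp
  moreover have "ordge (Suc k) (\<phi> vy * \<phi> h2)"
    using ordge_mult[OF assms(3) Suc.IH[OF h(3)]] by simp
  ultimately show ?case by (simp add: ordge_add)
qed

lemma monom_nth:
  "(cst c * vx ^ i * vy ^ j :: 'a::comm_ring_1 bips) $ n $ m = (if n = i \<and> m = j then c else 0)"
proof -
  have "(cst c * vx ^ i * vy ^ j :: 'a bips) = fps_X ^ i * fps_const (fps_const c * fps_X ^ j)"
    by (simp add: cst_def vx_def vy_def mult_ac)
  then show ?thesis
    by (simp add: fps_X_power_mult_nth)
qed

lemma hom_unique:
  assumes "hom \<phi>" "hom \<chi>" "\<phi> vx = \<chi> vx" "\<phi> vy = \<chi> vy" "ordge 1 (\<phi> vx)" "ordge 1 (\<phi> vy)"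
  shows "\<phi> h = \<chi> h"
proof -
  have "ordge k (\<phi> h - \<chi> h)" for k
  proof -
    define p where "p = (\<Sum>i<k. \<Sum>j<k. cst (h$i$j) * vx ^ i * vy ^ j)"
    have "ordge k (h - p)"
    proof (unfold ordge_def, intro allI impI)
      fix n m assume nm: "n + m < k"
      have "p $ n $ m = (\<Sum>i<k. \<Sum>j<k. (if n = i \<and> m = j then h$i$j else 0))"
        by (simp add: p_def fps_sum_nth monom_nth)
      also have "\<dots> = (\<Sum>i<k. (if n = i then h$i$m else 0))"
      proof (rule sum.cong[OF refl])
        fix i show "(\<Sum>j<k. (if n = i \<and> m = j then h$i$j else 0)) = (if n = i then h$i$m else 0)"
          using nm by (cases "n = i") simp_all
      qed
      also have "\<dots> = h $ n $ m"
        using nm by simp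
      finally show "(h - p) $ n $ m = 0" by simp
    qed
    have "\<phi> p = \<chi> p"
      using assms(1-4) by (simp add: p_def hom_sum hom_mult hom_power hom_cst)
    have "\<phi> h - \<chi> h = \<phi> (h - p) - \<chi> (h - p)"
      using assms(1,2) \<open>\<phi> p = \<chi> p\<close> by (simp add: hom_diff)
    moreover have "ordge k (\<phi> (h - p))"
      using hom_ordge[OF assms(1,5,6) \<open>ordge k (h-p)\<close>] .
    moreover have "ordge k (\<chi> (h - p))"
      using hom_ordge[OF assms(2) _ _ \<open>ordge k (h-p)\<close>] assms(3-6) by simp
    ultimately show ?thesis by (simp add: ordge_diff)
  qed
  then have "\<phi> h - \<chi> h = 0" by (rule ordge_all)
  then show ?thesis by simp
qed



definition rhom :: "('b::comm_ring_1 \<Rightarrow> 'a::comm_ring_1 bips) \<Rightarrow> bool" where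
  "rhom \<iota> \<longleftrightarrow> (\<forall>a b. \<iota> (a + b) = \<iota> a + \<iota> b) \<and> (\<forall>a b. \<iota> (a * b) = \<iota> a * \<iota> b) \<and> \<iota> 1 = 1"

lemma rhomD:
  assumes "rhom \<iota>"
  shows rhom_add: "\<iota> (a + b) = \<iota> a + \<iota> b" and rhom_mult: "\<iota> (a * b) = \<iota> a * \<iota> b"
    and rhom_1: "\<iota> 1 = 1"
  using assms by (auto simp: rhom_def)

lemma rhom_0: "rhom \<iota> \<Longrightarrow> \<iota> 0 = 0"
  using rhom_add[of \<iota> 0 0] by simp

lemma rhom_sum: "rhom \<iota> \<Longrightarrow> \<iota> (sum f S) = (\<Sum>i\<in>S. \<iota> (f i))"
  by (induction S rule: infinite_finite_induct) (simp_all add: rhom_0 rhom_add)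

definition evalR :: "('b::comm_ring_1 \<Rightarrow> 'a::comm_ring_1 bips) \<Rightarrow> 'a bips \<Rightarrow> 'b fps \<Rightarrow> 'a bips" where
  "evalR \<iota> z s = Abs_fps (\<lambda>n. Abs_fps (\<lambda>m. (\<Sum>i\<le>n+m. \<iota> (s$i) * z^i) $ n $ m))"

lemma evalR_nth: "evalR \<iota> z s $ n $ m = (\<Sum>i\<le>n+m. \<iota> (s$i) * z^i) $ n $ m"
  by (simp add: evalR_def)

lemma evalR_trunc:
  assumes z: "ordge 1 z" and nm: "n + m < M"
  shows "evalR \<iota> z s $ n $ m = (\<Sum>i<M. \<iota> (s$i) * z^i) $ n $ m"
proof -
  have sub: "{..n+m} \<subseteq> {..<M}" using nm by auto
  have "(\<Sum>i<M. \<iota> (s$i) * z^i) = (\<Sum>i\<in>{..<M} - {..n+m}. \<iota> (s$i) * z^i) + (\<Sum>i\<le>n+m. \<iota> (s$i) * z^i)"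
    by (rule sum.subset_diff[OF sub]) simp
  moreover have "ordge (Suc (n+m)) (\<Sum>i\<in>{..<M} - {..n+m}. \<iota> (s$i) * z^i)"
  proof (rule ordge_sum)
    fix i assume "i \<in> {..<M} - {..n+m}"
    then have "Suc (n+m) \<le> i" by auto
    then show "ordge (Suc (n+m)) (\<iota> (s$i) * z^i)"
      using ordge_multL[OF ordge_power[OF z, of i]] ordge_mono by fastforce
  qed
  ultimately show ?thesis by (simp add: evalR_nth ordge_def)
qed

lemma ordge_evalR_trunc:
  assumes z: "ordge 1 z"
  shows "ordge M (evalR \<iota> z s - (\<Sum>i<M. \<iota> (s$i) * z^i))"
proof (unfold ordge_def, intro allI impI)
  fix n m assume "n + m < M"
  then show "(evalR \<iota> z s - (\<Sum>i<M. \<iota> (s$i) * z^i)) $ n $ m = 0"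
    using evalR_trunc[OF z, of n m M] by simp
qed

lemma evalR_add:
  assumes "rhom \<iota>"
  shows "evalR \<iota> z (s + t) = evalR \<iota> z s + evalR \<iota> z t"
  by (rule fps_ext, rule fps_ext)
     (simp add: evalR_nth rhom_add[OF assms] distrib_right sum.distrib fps_sum_nth)

lemma evalR_zero:
  assumes "rhom \<iota>"
  shows "evalR \<iota> z 0 = 0"
  by (rule fps_ext, rule fps_ext) (simp add: evalR_nth rhom_0[OF assms] fps_sum_nth)

lemma evalR_sum:
  assumes "rhom \<iota>"
  shows "evalR \<iota> z (sum f S) = (\<Sum>i\<in>S. evalR \<iota> z (f i))"
  by (induction S rule: infinite_finite_induct) (simp_all add: evalR_zero[OF assms] evalR_add[OF assms])

lemma evalR_monom:
  assumes "rhom \<iota>" "ordge 1 z"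
  shows "evalR \<iota> z (fps_const c * fps_X ^ k) = \<iota> c * z ^ k"
proof (rule fps_ext, rule fps_ext)
  fix n m
  define M where "M = Suc (max (n+m) k)"
  have nm: "n + m < M" and kM: "k < M" by (auto simp: M_def)
  have eq: "\<iota> ((fps_const c * fps_X ^ k) $ i) * z^i = (if i = k then \<iota> c * z^k else 0)" for i
    by (cases "i = k") (simp_all add: rhom_0[OF assms(1)])
  have "(\<Sum>i<M. \<iota> ((fps_const c * fps_X ^ k) $ i) * z^i) = (\<Sum>i<M. if i = k then \<iota> c * z^k else 0)"
    by (simp only: eq)
  also have "\<dots> = \<iota> c * z^k" using kM by simp
  finally have S: "(\<Sum>i<M. \<iota> ((fps_const c * fps_X ^ k) $ i) * z^i) = \<iota> c * z^k" .
  have t: "evalR \<iota> z (fps_const c * fps_X ^ k) $ n $ m = (\<Sum>i<M. \<iota> ((fps_const c * fps_X ^ k) $ i) * z^i) $ n $ m"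
    by (rule evalR_trunc[OF assms(2) nm])
  show "evalR \<iota> z (fps_const c * fps_X ^ k) $ n $ m = (\<iota> c * z ^ k) $ n $ m"
    by (subst t, subst S, rule refl)
qed

lemma evalR_const:
  assumes "rhom \<iota>" "ordge 1 z"
  shows "evalR \<iota> z (fps_const c) = \<iota> c"
  using evalR_monom[OF assms, of c 0] by simp

lemma evalR_X:
  assumes "rhom \<iota>" "ordge 1 z"
  shows "evalR \<iota> z fps_X = z"
  using evalR_monom[OF assms, of 1 1] by (simp add: rhom_1[OF assms(1)])

lemma evalR_tail:
  assumes "rhom \<iota>"
  shows "ordge M (evalR \<iota> z (fps_X ^ M * w))"
  unfolding ordge_def
proof (intro allI impI)
  fix n m assume "n + m < M"
  then have "(\<Sum>i\<le>n+m. \<iota> ((fps_X ^ M * w) $ i) * z^i) = 0"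
    by (intro sum.neutral) (auto simp: fps_X_power_mult_nth rhom_0[OF assms])
  then show "evalR \<iota> z (fps_X ^ M * w) $ n $ m = 0"
    by (simp add: evalR_nth)
qed

lemma fps_poly_decomp:
  fixes s :: "'b::comm_ring_1 fps"
  shows "s = (\<Sum>i<M. fps_const (s$i) * fps_X^i) + fps_X^M * fps_shift M s"
proof (rule fps_ext)
  fix n
  have eq: "(fps_const (s$i) * fps_X^i) $ n = (if n = i then s$i else 0)" for i
    by simp
  have "(\<Sum>i<M. fps_const (s$i) * fps_X^i) $ n = (\<Sum>i<M. if n = i then s$i else 0)"
    by (simp only: fps_sum_nth eq)
  also have "\<dots> = (if n < M then s$n else 0)" by simp
  finally show "s $ n = ((\<Sum>i<M. fps_const (s$i) * fps_X^i) + fps_X^M * fps_shift M s) $ n"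
    by (simp add: fps_X_power_mult_nth)
qed

lemma evalR_mult:
  assumes r: "rhom \<iota>" and z: "ordge 1 z"
  shows "evalR \<iota> z (s * t) = evalR \<iota> z s * evalR \<iota> z t"
proof -
  let ?E = "evalR \<iota> z"
  have "ordge M (?E s * ?E t - ?E (s * t))" for M
  proof -
    define ps where "ps = (\<Sum>i<M. fps_const (s$i) * fps_X^i)"
    define pt where "pt = (\<Sum>i<M. fps_const (t$i) * fps_X^i)"
    define s' where "s' = fps_shift M s"
    define t' where "t' = fps_shift M t"
    have s: "s = ps + fps_X^M * s'" unfolding ps_def s'_def by (rule fps_poly_decomp)
    have t: "t = pt + fps_X^M * t'" unfolding pt_def t'_def by (rule fps_poly_decomp)
    define w where "w = s' * pt + ps * t' + fps_X^M * s' * t'"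
    have st: "s * t = ps * pt + fps_X^M * w"
      by (simp add: s t w_def algebra_simps)
    have "ps * pt = (\<Sum>i<M. \<Sum>j<M. fps_const (s$i * t$j) * fps_X^(i+j))"
      by (simp add: ps_def pt_def sum_product power_add mult_ac)
    then have "?E (ps * pt) = (\<Sum>i<M. \<Sum>j<M. \<iota> (s$i * t$j) * z^(i+j))"
      by (simp add: evalR_sum[OF r] evalR_monom[OF r z])
    also have "\<dots> = (\<Sum>i<M. \<iota> (s$i) * z^i) * (\<Sum>j<M. \<iota> (t$j) * z^j)"
      by (simp add: sum_product rhom_mult[OF r] power_add mult_ac)
    also have "\<dots> = ?E ps * ?E pt"
      by (simp add: ps_def pt_def evalR_sum[OF r] evalR_monom[OF r z])
    finally have pp: "?E (ps * pt) = ?E ps * ?E pt" .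
    have Es: "?E s = ?E ps + ?E (fps_X^M * s')" using s evalR_add[OF r] by metis
    have Et: "?E t = ?E pt + ?E (fps_X^M * t')" using t evalR_add[OF r] by metis
    have Est: "?E (s * t) = ?E ps * ?E pt + ?E (fps_X^M * w)" using st evalR_add[OF r] pp by metis
    have "?E s * ?E t - ?E (s * t) = ?E ps * ?E (fps_X^M * t') + ?E (fps_X^M * s') * (?E pt + ?E (fps_X^M * t')) - ?E (fps_X^M * w)"
      by (simp add: Es Et Est algebra_simps)
    moreover have "ordge M (?E ps * ?E (fps_X^M * t'))" by (rule ordge_multL[OF evalR_tail[OF r]])
    moreover have "ordge M (?E (fps_X^M * s') * (?E pt + ?E (fps_X^M * t')))" by (rule ordge_multR[OF evalR_tail[OF r]])
    moreover have "ordge M (?E (fps_X^M * w))" by (rule evalR_tail[OF r])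
    ultimately show ?thesis by (simp add: ordge_add ordge_diff)
  qed
  then have "?E s * ?E t - ?E (s * t) = 0" by (rule ordge_all)
  then show ?thesis by simp
qed

lemma rhom_evalR:
  assumes "rhom \<iota>" "ordge 1 z"
  shows "rhom (evalR \<iota> z)"
  unfolding rhom_def
  using evalR_add[OF assms(1)] evalR_mult[OF assms] evalR_const[OF assms, of 1] rhom_1[OF assms(1)]
  by (simp add: fps_const_1_eq_1[symmetric] del: fps_const_1_eq_1)

lemma rhom_cst: "rhom (cst :: 'a \<Rightarrow> 'a::comm_ring_1 bips)"
  by (simp add: rhom_def cst_add cst_mult cst_1)

definition Phi :: "'a::comm_ring_1 bips \<Rightarrow> 'a fps \<Rightarrow> 'a bips" where
  "Phi Q = evalR cst Q"

definition subst :: "'a::comm_ring_1 bips \<Rightarrow> 'a bips \<Rightarrow> 'a bips \<Rightarrow> 'a bips" where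
  "subst P Q = evalR (Phi Q) P"

lemma rhom_Phi: "ordge 1 Q \<Longrightarrow> rhom (Phi Q)"
  unfolding Phi_def by (rule rhom_evalR[OF rhom_cst])

lemma hom_subst:
  assumes "ordge 1 P" "ordge 1 Q"
  shows "hom (subst P Q)"
proof -
  have r: "rhom (Phi Q)" using rhom_Phi[OF assms(2)] .
  have "subst P Q (cst c) = cst c" for c
    using evalR_const[OF r assms(1), of "fps_const c"] evalR_const[OF rhom_cst assms(2), of c]
    by (simp add: subst_def Phi_def cst_def)
  then show ?thesis
    unfolding hom_def subst_def using evalR_add[OF r] evalR_mult[OF r assms(1)] by simp
qed

lemma subst_vx:
  assumes "ordge 1 P" "ordge 1 Q"
  shows "subst P Q vx = P"
  unfolding subst_def vx_def by (rule evalR_X[OF rhom_Phi[OF assms(2)] assms(1)])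

lemma subst_vy:
  assumes "ordge 1 P" "ordge 1 Q"
  shows "subst P Q vy = Q"
  unfolding subst_def vy_def
  using evalR_const[OF rhom_Phi[OF assms(2)] assms(1)] evalR_X[OF rhom_cst assms(2)]
  by (simp add: Phi_def)

lemma subst_of_y:
  assumes "ordge 1 P" "ordge 1 Q"
  shows "subst P Q (of_y a) = Phi Q a"
  unfolding subst_def of_y_def
  using evalR_const[OF rhom_Phi[OF assms(2)] assms(1)] by simp



lemma is_aut_hom: "is_aut \<phi> \<Longrightarrow> hom \<phi>"
  by (simp add: is_aut_def hom_def)

lemma is_aut_id: "is_aut id"
  by (simp add: is_aut_def)

lemma is_aut_comp: "is_aut \<phi> \<Longrightarrow> is_aut \<psi> \<Longrightarrow> is_aut (\<phi> \<circ> \<psi>)"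
  by (simp add: is_aut_def bij_comp)

lemma aut_subst:
  fixes P Q P' Q' :: "'a::comm_ring_1 bips"
  assumes o: "ordge 1 P" "ordge 1 Q" "ordge 1 P'" "ordge 1 Q'"
    and e: "subst P Q P' = vx" "subst P Q Q' = vy" "subst P' Q' P = vx" "subst P' Q' Q = vy"
  shows "is_aut (subst P Q)"
proof -
  let ?f = "subst P Q" and ?g = "subst P' Q'"
  have hf: "hom ?f" and hg: "hom ?g" using hom_subst o by blast+
  have "(?f \<circ> ?g) h = id h" for h
    by (rule hom_unique[OF hom_comp[OF hf hg] hom_id])
       (simp_all add: subst_vx[OF o(3,4)] subst_vy[OF o(3,4)] e ordge_vx ordge_vy)
  then have fg: "?f \<circ> ?g = id" by auto
  have "(?g \<circ> ?f) h = id h" for h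
    by (rule hom_unique[OF hom_comp[OF hg hf] hom_id])
       (simp_all add: subst_vx[OF o(1,2)] subst_vy[OF o(1,2)] e ordge_vx ordge_vy)
  then have gf: "?g \<circ> ?f = id" by auto
  have "bij ?f" using o_bij[OF gf fg] .
  then show ?thesis using hf by (simp add: is_aut_def hom_def)
qed

lemma Phi_vy: "Phi vy a = (of_y a :: 'a::comm_ring_1 bips)"
proof (rule fps_ext, rule fps_ext)
  fix n m
  have eq: "cst (a$i) * vy^i = (fps_const (fps_const (a$i) * fps_X^i) :: 'a bips)" for i
    by (simp add: cst_def vy_def)
  show "Phi vy a $ n $ m = of_y a $ n $ m"
  proof (cases "n = 0")
    case True
    have "(\<Sum>i\<le>m. (fps_const (a$i) * fps_X^i) $ m) = (\<Sum>i\<le>m. if i = m then a$m else 0)"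
      by (rule sum.cong) auto
    then show ?thesis using True
      by (simp add: Phi_def evalR_nth eq fps_sum_nth of_y_def)
  next
    case False
    then show ?thesis by (simp add: Phi_def evalR_nth eq fps_sum_nth of_y_def)
  qed
qed

lemma subst_of_y_vy:
  assumes "ordge 1 P"
  shows "subst P vy (of_y a) = of_y a"
  using subst_of_y[OF assms ordge_vy] Phi_vy by simp

lemma mult_00: "((a::'a::comm_ring_1 bips) * b) $ 0 $ 0 = a$0$0 * b$0$0"
  by (simp add: mult_nth2)

lemma pow_00: "((a::'a::comm_ring_1 bips) ^ n) $ 0 $ 0 = (a$0$0) ^ n"
  by (induction n) (simp_all add: mult_00)

lemma unit_bips:
  fixes h :: "'a::field bips"
  assumes "h $ 0 $ 0 \<noteq> 0"
  shows "\<exists>w. h * w = 1"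
proof -
  define z where "z = fps_right_inverse (h$0) (inverse (h$0$0))"
  have "h$0 * z = 1" unfolding z_def by (rule fps_right_inverse) (simp add: assms)
  then have "h * fps_right_inverse h z = 1" by (rule fps_right_inverse)
  then show ?thesis by blast
qed

lemma ce_intro:
  assumes "is_aut \<phi>" "(u11 * u22 - u12 * u21) * w = 1"
  shows "contact_equiv g (u11 * \<phi> (fst g) + u12 * \<phi> (snd g), u21 * \<phi> (fst g) + u22 * \<phi> (snd g))"
  unfolding contact_equiv_def
  apply (rule exI[of _ u11], rule exI[of _ u12], rule exI[of _ u21], rule exI[of _ u22], rule exI[of _ \<phi>])
  using assms by auto

lemma ce_trans:
  fixes f g h :: "'a::field bips \<times> 'a bips"
  assumes "contact_equiv f g" "contact_equiv g h"
  shows "contact_equiv f h"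
proof -
  obtain u11 u12 u21 u22 \<phi> w where U: "(u11 * u22 - u12 * u21) * w = 1" "is_aut \<phi>"
    "fst g = u11 * \<phi> (fst f) + u12 * \<phi> (snd f)" "snd g = u21 * \<phi> (fst f) + u22 * \<phi> (snd f)"
    using assms(1) unfolding contact_equiv_def by blast
  obtain v11 v12 v21 v22 \<psi> w' where V: "(v11 * v22 - v12 * v21) * w' = 1" "is_aut \<psi>"
    "fst h = v11 * \<psi> (fst g) + v12 * \<psi> (snd g)" "snd h = v21 * \<psi> (fst g) + v22 * \<psi> (snd g)"
    using assms(2) unfolding contact_equiv_def by blast
  have hp: "hom \<psi>" using V(2) by (rule is_aut_hom)
  define m11 where "m11 = v11 * \<psi> u11 + v12 * \<psi> u21"
  define m12 where "m12 = v11 * \<psi> u12 + v12 * \<psi> u22"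
  define m21 where "m21 = v21 * \<psi> u11 + v22 * \<psi> u21"
  define m22 where "m22 = v21 * \<psi> u12 + v22 * \<psi> u22"
  have dU: "(\<psi> u11 * \<psi> u22 - \<psi> u12 * \<psi> u21) * \<psi> w = 1"
    using arg_cong[OF U(1), of \<psi>] by (simp add: hom_mult[OF hp] hom_diff[OF hp] hom_1[OF hp])
  have "(m11 * m22 - m12 * m21) = (v11 * v22 - v12 * v21) * (\<psi> u11 * \<psi> u22 - \<psi> u12 * \<psi> u21)"
    unfolding m11_def m12_def m21_def m22_def by algebra
  then have det: "(m11 * m22 - m12 * m21) * (w' * \<psi> w) = 1"
    using V(1) dU by (metis (no_types, lifting) mult.assoc mult.left_commute mult_1_right)
  have h1: "fst h = m11 * (\<psi> \<circ> \<phi>) (fst f) + m12 * (\<psi> \<circ> \<phi>) (snd f)"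
    unfolding V(3) U(3) U(4) m11_def m12_def
    by (simp add: hom_add[OF hp] hom_mult[OF hp] algebra_simps)
  have h2: "snd h = m21 * (\<psi> \<circ> \<phi>) (fst f) + m22 * (\<psi> \<circ> \<phi>) (snd f)"
    unfolding V(4) U(3) U(4) m21_def m22_def
    by (simp add: hom_add[OF hp] hom_mult[OF hp] algebra_simps)
  show ?thesis unfolding contact_equiv_def
    using det h1 h2 is_aut_comp[OF V(2) U(2)] by blast
qed

lemma ce_perturb:
  fixes N1 N2 a1 b1 a2 b2 :: "'a::field bips"
  assumes "in_max a1" "in_max b1" "in_max a2" "in_max b2"
  shows "contact_equiv ((1 + a1) * N1 + b1 * N2, a2 * N1 + (1 + b2) * N2) (N1, N2)"
proof -
  define D where "D = (1 + a1) * (1 + b2) - b1 * a2"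
  have "D $ 0 $ 0 = 1" using assms by (simp add: D_def mult_00 in_max_def)
  then obtain w where w: "D * w = 1" using unit_bips[of D] by auto
  have e1: "(w * (1 + b2)) * ((1 + a1) * N1 + b1 * N2) + (- w * b1) * (a2 * N1 + (1 + b2) * N2) = N1"
  proof -
    have "(w * (1 + b2)) * ((1 + a1) * N1 + b1 * N2) + (- w * b1) * (a2 * N1 + (1 + b2) * N2) = (D * w) * N1"
      unfolding D_def by algebra
    then show ?thesis using w by simp
  qed
  have e2: "(- w * a2) * ((1 + a1) * N1 + b1 * N2) + (w * (1 + a1)) * (a2 * N1 + (1 + b2) * N2) = N2"
  proof -
    have "(- w * a2) * ((1 + a1) * N1 + b1 * N2) + (w * (1 + a1)) * (a2 * N1 + (1 + b2) * N2) = (D * w) * N2"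
      unfolding D_def by algebra
    then show ?thesis using w by simp
  qed
  have det: "((w * (1 + b2)) * (w * (1 + a1)) - (- w * b1) * (- w * a2)) * D = 1"
  proof -
    have "((w * (1 + b2)) * (w * (1 + a1)) - (- w * b1) * (- w * a2)) * D = (D * w) * (D * w)"
      unfolding D_def by algebra
    then show ?thesis using w by simp
  qed
  show ?thesis
    using ce_intro[OF is_aut_id det, of "((1 + a1) * N1 + b1 * N2, a2 * N1 + (1 + b2) * N2)"] e1 e2
    by simp
qed



lemma ordge_ideal_induct:
  fixes h :: "'a::comm_ring_1 bips"
  assumes "ordge k h"
    and "\<And>a b. S a \<Longrightarrow> S b \<Longrightarrow> S (a + b)"
    and "\<And>i r. i \<le> k \<Longrightarrow> S (vx ^ i * vy ^ (k - i) * r)"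
  shows "S h"
  using assms
proof (induction k arbitrary: S h)
  case 0
  then show ?case using "0.prems"(3)[of 0 h] by simp
next
  case (Suc k)
  obtain h1 h2 where h: "h = vx * h1 + vy * h2" "ordge k h1" "ordge k h2"
    using ordge_decomp[OF Suc.prems(1)] by blast
  have "(\<lambda>g. S (vx * g)) h1"
  proof (rule Suc.IH[OF h(2)])
    fix a b assume "S (vx * a)" "S (vx * b)" then show "S (vx * (a + b))"
      using Suc.prems(2) by (simp add: distrib_left)
  next
    fix i r assume "i \<le> k"
    then show "S (vx * (vx ^ i * vy ^ (k - i) * r))"
      using Suc.prems(3)[of "Suc i" r] by (simp add: mult_ac)
  qed
  moreover have "(\<lambda>g. S (vy * g)) h2"
  proof (rule Suc.IH[OF h(3)])
    fix a b assume "S (vy * a)" "S (vy * b)" then show "S (vy * (a + b))"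
      using Suc.prems(2) by (simp add: distrib_left)
  next
    fix i r assume i: "i \<le> k"
    then have "Suc k - i = Suc (k - i)" by simp
    then show "S (vy * (vx ^ i * vy ^ (k - i) * r))"
      using Suc.prems(3)[of i r] i by (simp add: mult_ac)
  qed
  ultimately show ?case using Suc.prems(2) h(1) by simp
qed

lemma in_max_add: "in_max a \<Longrightarrow> in_max b \<Longrightarrow> in_max (a + b)"
  by (simp add: in_max_def)
lemma in_max_diff: "in_max a \<Longrightarrow> in_max b \<Longrightarrow> in_max (a - b)"
  by (simp add: in_max_def)
lemma in_max_uminus: "in_max a \<Longrightarrow> in_max (- a)"
  by (simp add: in_max_def)
lemma in_max_multL: "in_max b \<Longrightarrow> in_max (a * b)"
  by (simp add: in_max_def mult_00)
lemma in_max_multR: "in_max a \<Longrightarrow> in_max (a * b)"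
  by (simp add: in_max_def mult_00)
lemma in_max_vx: "in_max vx"
  by (simp add: in_max_def vx_nth)
lemma in_max_vy: "in_max vy"
  by (simp add: in_max_def vy_nth)
lemma in_max_0: "in_max 0"
  by (simp add: in_max_def)

definition NF1 :: "'a::comm_ring_1 bips" where "NF1 = vx^3 + vy^4"
definition NF2 :: "'a::comm_ring_1 \<Rightarrow> 'a bips" where "NF2 K = vx^2 * vy + cst K * vy^4"

definition inmI :: "'a::comm_ring_1 \<Rightarrow> 'a bips \<Rightarrow> bool" where
  "inmI K h \<longleftrightarrow> (\<exists>a b. in_max a \<and> in_max b \<and> h = a * NF1 + b * NF2 K)"

lemma inmI_add: "inmI K a \<Longrightarrow> inmI K b \<Longrightarrow> inmI K (a + b)"
  unfolding inmI_def
proof (elim exE conjE)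
  fix a1 b1 a2 b2
  assume "in_max a1" "in_max b1" "a = a1 * NF1 + b1 * NF2 K" "in_max a2" "in_max b2" "b = a2 * NF1 + b2 * NF2 K"
  then show "\<exists>a' b'. in_max a' \<and> in_max b' \<and> a + b = a' * NF1 + b' * NF2 K"
    by (intro exI[of _ "a1 + a2"] exI[of _ "b1 + b2"]) (simp add: in_max_add algebra_simps)
qed

lemma inmI_mult: "inmI K a \<Longrightarrow> inmI K (r * a)"
  unfolding inmI_def
proof (elim exE conjE)
  fix a1 b1
  assume "in_max a1" "in_max b1" "a = a1 * NF1 + b1 * NF2 K"
  then have "r * a = (r * a1) * NF1 + (r * b1) * NF2 K" by (simp add: algebra_simps)
  then show "\<exists>a' b'. in_max a' \<and> in_max b' \<and> r * a = a' * NF1 + b' * NF2 K"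
    using \<open>in_max a1\<close> \<open>in_max b1\<close> in_max_multL by blast
qed

lemma inmI_diff: "inmI K a \<Longrightarrow> inmI K b \<Longrightarrow> inmI K (a - b)"
  using inmI_add[of K a "(-1) * b"] inmI_mult[of K b "-1"] by simp

lemma inmI_gen: "in_max a \<Longrightarrow> in_max b \<Longrightarrow> inmI K (a * NF1 + b * NF2 K)"
  unfolding inmI_def by blast

lemma inmI_y6:
  fixes K :: "'a::field"
  shows "inmI K (vy ^ 6)"
proof -
  define k where "k = (cst K :: 'a bips)"
  have "(1 + k^3 * vy) $ 0 $ 0 \<noteq> 0" by (simp add: vy_nth)
  then obtain w where w: "(1 + k^3 * vy) * w = 1" using unit_bips by blast
  have id: "(vy^2 + k * vx * vy) * NF1 + (- vx * vy - k * vx^2 + k^2 * vy^3) * NF2 K = vy^6 * (1 + k^3 * vy)"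
    unfolding NF1_def NF2_def k_def[symmetric] by algebra
  have "vy^6 = (w * (vy^2 + k * vx * vy)) * NF1 + (w * (- vx * vy - k * vx^2 + k^2 * vy^3)) * NF2 K"
  proof -
    have "vy^6 = vy^6 * ((1 + k^3 * vy) * w)" using w by simp
    also have "\<dots> = w * ((vy^2 + k * vx * vy) * NF1 + (- vx * vy - k * vx^2 + k^2 * vy^3) * NF2 K)"
      using id by (simp add: mult_ac)
    finally show ?thesis by (simp add: algebra_simps)
  qed
  moreover have "in_max (w * (vy^2 + k * vx * vy))"
    by (intro in_max_multL in_max_add) (simp_all add: in_max_def vy_nth vx_nth mult_00 power2_eq_square)
  moreover have "in_max (w * (- vx * vy - k * vx^2 + k^2 * vy^3))"
    by (intro in_max_multL in_max_add in_max_diff) (simp_all add: in_max_def vy_nth vx_nth mult_00 power2_eq_square power3_eq_cube)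
  ultimately show ?thesis unfolding inmI_def by blast
qed

lemma inmI_monos:
  fixes K :: "'a::field"
  shows "\<And>i. i \<le> 6 \<Longrightarrow> inmI K (vx ^ i * vy ^ (6 - i))"
proof -
  define k where "k = (cst K :: 'a bips)"
  have inx: "in_max (vx ^ Suc n)" for n by (simp add: in_max_multR in_max_vx)
  have iny: "in_max (vy ^ Suc n)" for n by (simp add: in_max_multR in_max_vy)
  have y6: "inmI K (vy ^ 6)" by (rule inmI_y6)
  have xy5: "inmI K (vx * vy^5)"
  proof -
    have "vx * vy^5 = (vx * vy) * NF1 + (k * vy^3 - vx^2) * NF2 K - (k^2 * vy) * vy^6"
      unfolding NF1_def NF2_def k_def[symmetric] by algebra
    moreover have "inmI K ((vx * vy) * NF1 + (k * vy^3 - vx^2) * NF2 K)"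
      by (intro inmI_gen) (simp_all add: in_max_def mult_00 pow_00 vx_nth vy_nth)
    ultimately show ?thesis using inmI_diff inmI_mult y6 by metis
  qed
  have x2y4: "inmI K (vx^2 * vy^4)"
  proof -
    have "vx^2 * vy^4 = 0 * NF1 + vy^3 * NF2 K - (k * vy) * vy^6"
      unfolding NF1_def NF2_def k_def[symmetric] by algebra
    moreover have "inmI K (0 * NF1 + vy^3 * NF2 K)"
      by (intro inmI_gen) (simp_all add: in_max_def mult_00 pow_00 vx_nth vy_nth)
    ultimately show ?thesis using inmI_diff inmI_mult y6 by metis
  qed
  have x3y3: "inmI K (vx^3 * vy^3)"
  proof -
    have "vx^3 * vy^3 = 0 * NF1 + (vx * vy^2) * NF2 K - (k * vx) * vy^6"
      unfolding NF1_def NF2_def k_def[symmetric] by algebra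
    moreover have "inmI K (0 * NF1 + (vx * vy^2) * NF2 K)"
      by (intro inmI_gen) (simp_all add: in_max_def mult_00 pow_00 vx_nth vy_nth)
    ultimately show ?thesis using inmI_diff inmI_mult y6 by metis
  qed
  have x4y2: "inmI K (vx^4 * vy^2)"
  proof -
    have "vx^4 * vy^2 = 0 * NF1 + (vx^2 * vy) * NF2 K - (k * vx) * (vx * vy^5)"
      unfolding NF1_def NF2_def k_def[symmetric] by algebra
    moreover have "inmI K (0 * NF1 + (vx^2 * vy) * NF2 K)"
      by (intro inmI_gen) (simp_all add: in_max_def mult_00 pow_00 vx_nth vy_nth)
    ultimately show ?thesis using inmI_diff inmI_mult xy5 by metis
  qed
  have x5y: "inmI K (vx^5 * vy)"
  proof -
    have "vx^5 * vy = 0 * NF1 + vx^3 * NF2 K - (k * vx) * (vx^2 * vy^4)"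
      unfolding NF1_def NF2_def k_def[symmetric] by algebra
    moreover have "inmI K (0 * NF1 + vx^3 * NF2 K)"
      by (intro inmI_gen) (simp_all add: in_max_def mult_00 pow_00 vx_nth vy_nth)
    ultimately show ?thesis using inmI_diff inmI_mult x2y4 by metis
  qed
  have x6: "inmI K (vx^6)"
  proof -
    have "vx^6 = vx^3 * NF1 + 0 * NF2 K - vx * (vx^2 * vy^4)"
      unfolding NF1_def NF2_def k_def[symmetric] by algebra
    moreover have "inmI K (vx^3 * NF1 + 0 * NF2 K)"
      by (intro inmI_gen) (simp_all add: in_max_def mult_00 pow_00 vx_nth vy_nth)
    ultimately show ?thesis using inmI_diff inmI_mult x2y4 by metis
  qed
  fix i :: nat assume "i \<le> 6"
  then have "i = 0 \<or> i = 1 \<or> i = 2 \<or> i = 3 \<or> i = 4 \<or> i = 5 \<or> i = 6" by auto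
  then show "inmI K (vx ^ i * vy ^ (6 - i))"
    using y6 xy5 x2y4 x3y3 x4y2 x5y x6 by auto
qed

lemma ordge6_inmI:
  fixes K :: "'a::field"
  assumes "ordge 6 h"
  shows "inmI K h"
  by (rule ordge_ideal_induct[OF assms, of "inmI K"])
     (auto intro: inmI_add simp: mult.commute[of _ "r" for r] intro!: inmI_mult inmI_monos)


lemma slot1_core:
  fixes x y A0 A1 b1 C0 C1 e d u v K :: "'r::idom"
  shows "((x + d*y^2 + u*y^3)^3 + (A0 + A1*((1 + v*(x + d*y^2 + u*y^3))*y + e*(x + d*y^2 + u*y^3)))*(x + d*y^2 + u*y^3)*((1 + v*(x + d*y^2 + u*y^3))*y + e*(x + d*y^2 + u*y^3))^3 + (1 + b1*((1 + v*(x + d*y^2 + u*y^3))*y + e*(x + d*y^2 + u*y^3)))*((1 + v*(x + d*y^2 + u*y^3))*y + e*(x + d*y^2 + u*y^3))^4) = (x^3 + y^4) + (x*(e^4 + A0*e^3 + 4*y*e^3*v + 5*y*b1*e^4 + 4*y*A1*e^3 + 3*y*A0*e^2*v + x*b1*e^5 + x*A1*e^4) + y*(- 3*d*K + 4*e*d - 6*e^2*K + b1 + A0*d - 3*A0*e*K + 12*y*e^2*v + 4*y*e^4*d + 10*y*b1*e^3 + 6*y*A1*e^2 + 6*y*A0*e*v + 4*y*A0*e^3*d))*(x^3 + y^4) + (x*(3*d*K - 4*e*d + 6*e^2*K + 4*e^3 - b1 - A0*d + 3*A0*e*K + 3*A0*e^2) + y*(3*d + 6*e^2 + 3*A0*e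 + 3*y*u + 12*y*e*v + 12*y*e^3*d + 10*y*b1*e^2 + 4*y*A1*e + 3*y*A0*v + 9*y*A0*e^2*d))*(x^2*y + K*y^4) + (4*e + A0)*(x*y^3) + (4*v - 3*d*K^2 + 3*d^2 + 4*e*d*K - 6*e^2*K^2 + 12*e^2*d - 4*e^3*K - e^4 + b1*K + 5*b1*e + A1 + A0*d*K - 3*A0*e*K^2 + 6*A0*e*d - 3*A0*e^2*K - A0*e^3)*(x*y^4) + (x^0*y^6*(- 3*u*K + 4*d*v + d^3 - 12*e*v*K + 4*e*u - 12*e^2*v + 6*e^2*d^2 - 12*e^3*d*K - 4*e^4*d + 5*b1*e*d - 10*b1*e^2*K - 10*b1*e^3 + A1*d - 4*A1*e*K - 6*A1*e^2 - 3*A0*v*K + A0*u - 6*A0*e*v + 3*A0*e*d^2 - 9*A0*e^2*d*K - 4*A0*e^3*d) + x^0*y^7*(4*u*v + 3*d^2*u + 12*e*d^2*v + 12*e^2*d*u + 4*e^3*d^3 + 5*b1*d*v + 5*b1*e*u + 10*b1*e^2*d^2 + A1*u + 4*A1*e*d^2 + 3*A0*d^2*v + 6*A0*e*d*u + 3*A0*e^2*d^3) + x^0*y^8*(3*d*u^2 + 6*d^2*v^2 + 24*e*d*u*v + 6*e^2*u^2 + 12*e^2*d^3*v + 12*e^3*d^2*u + e^4*d^4 + 5*b1*u*v + 20*b1*e*d^2*v + 20*b1*e^2*d*u + 10*b1*e^3*d^3 + 4*A1*d^2*v + 8*A1*e*d*u + 6*A1*e^2*d^3 + 6*A0*d*u*v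 + 3*A0*e*u^2 + 6*A0*e*d^3*v + 9*A0*e^2*d^2*u + A0*e^3*d^4) + x^0*y^9*(u^3 + 12*d*u*v^2 + 12*e*u^2*v + 12*e*d^3*v^2 + 36*e^2*d^2*u*v + 12*e^3*d*u^2 + 4*e^3*d^4*v + 4*e^4*d^3*u + 10*b1*d^2*v^2 + 40*b1*e*d*u*v + 10*b1*e^2*u^2 + 30*b1*e^2*d^3*v + 30*b1*e^3*d^2*u + 5*b1*e^4*d^4 + 8*A1*d*u*v + 4*A1*e*u^2 + 12*A1*e*d^3*v + 18*A1*e^2*d^2*u + 4*A1*e^3*d^4 + 3*A0*u^2*v + 3*A0*d^3*v^2 + 18*A0*e*d^2*u*v + 9*A0*e^2*d*u^2 + 3*A0*e^2*d^4*v + 4*A0*e^3*d^3*u) + x^0*y^10*(6*u^2*v^2 + 4*d^3*v^3 + 36*e*d^2*u*v^2 + 36*e^2*d*u^2*v + 6*e^2*d^4*v^2 + 4*e^3*u^3 + 16*e^3*d^3*u*v + 6*e^4*d^2*u^2 + 20*b1*d*u*v^2 + 20*b1*e*u^2*v + 30*b1*e*d^3*v^2 + 90*b1*e^2*d^2*u*v + 30*b1*e^3*d*u^2 + 20*b1*e^3*d^4*v + 20*b1*e^4*d^3*u + b1*e^5*d^5 + 4*A1*u^2*v + 6*A1*d^3*v^2 + 36*A1*e*d^2*u*v + 18*A1*e^2*d*u^2 + 12*A1*e^2*d^4*v + 16*A1*e^3*d^3*u + A1*e^4*d^5 + 9*A0*d^2*u*v^2 + 18*A0*e*d*u^2*v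 + 3*A0*e*d^4*v^2 + 3*A0*e^2*u^3 + 12*A0*e^2*d^3*u*v + 6*A0*e^3*d^2*u^2) + x^0*y^11*(12*d^2*u*v^3 + 36*e*d*u^2*v^2 + 4*e*d^4*v^3 + 12*e^2*u^3*v + 24*e^2*d^3*u*v^2 + 24*e^3*d^2*u^2*v + 4*e^4*d*u^3 + 10*b1*u^2*v^2 + 10*b1*d^3*v^3 + 90*b1*e*d^2*u*v^2 + 90*b1*e^2*d*u^2*v + 30*b1*e^2*d^4*v^2 + 10*b1*e^3*u^3 + 80*b1*e^3*d^3*u*v + 30*b1*e^4*d^2*u^2 + 5*b1*e^4*d^5*v + 5*b1*e^5*d^4*u + 18*A1*d^2*u*v^2 + 36*A1*e*d*u^2*v + 12*A1*e*d^4*v^2 + 6*A1*e^2*u^3 + 48*A1*e^2*d^3*u*v + 24*A1*e^3*d^2*u^2 + 4*A1*e^3*d^5*v + 5*A1*e^4*d^4*u + 9*A0*d*u^2*v^2 + A0*d^4*v^3 + 6*A0*e*u^3*v + 12*A0*e*d^3*u*v^2 + 18*A0*e^2*d^2*u^2*v + 4*A0*e^3*d*u^3) + x^0*y^12*(12*d*u^2*v^3 + d^4*v^4 + 12*e*u^3*v^2 + 16*e*d^3*u*v^3 + 36*e^2*d^2*u^2*v^2 + 16*e^3*d*u^3*v + e^4*u^4 + 30*b1*d^2*u*v^3 + 90*b1*e*d*u^2*v^2 + 20*b1*e*d^4*v^3 + 30*b1*e^2*u^3*v + 120*b1*e^2*d^3*u*v^2 + 120*b1*e^3*d^2*u^2*v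 + 10*b1*e^3*d^5*v^2 + 20*b1*e^4*d*u^3 + 25*b1*e^4*d^4*u*v + 10*b1*e^5*d^3*u^2 + 18*A1*d*u^2*v^2 + 4*A1*d^4*v^3 + 12*A1*e*u^3*v + 48*A1*e*d^3*u*v^2 + 72*A1*e^2*d^2*u^2*v + 6*A1*e^2*d^5*v^2 + 16*A1*e^3*d*u^3 + 20*A1*e^3*d^4*u*v + 10*A1*e^4*d^3*u^2 + 3*A0*u^3*v^2 + 4*A0*d^3*u*v^3 + 18*A0*e*d^2*u^2*v^2 + 12*A0*e^2*d*u^3*v + A0*e^3*u^4) + x^0*y^13*(4*u^3*v^3 + 4*d^3*u*v^4 + 24*e*d^2*u^2*v^3 + 24*e^2*d*u^3*v^2 + 4*e^3*u^4*v + 30*b1*d*u^2*v^3 + 5*b1*d^4*v^4 + 30*b1*e*u^3*v^2 + 80*b1*e*d^3*u*v^3 + 180*b1*e^2*d^2*u^2*v^2 + 10*b1*e^2*d^5*v^3 + 80*b1*e^3*d*u^3*v + 50*b1*e^3*d^4*u*v^2 + 5*b1*e^4*u^4 + 50*b1*e^4*d^3*u^2*v + 10*b1*e^5*d^2*u^3 + 6*A1*u^3*v^2 + 16*A1*d^3*u*v^3 + 72*A1*e*d^2*u^2*v^2 + 4*A1*e*d^5*v^3 + 48*A1*e^2*d*u^3*v + 30*A1*e^2*d^4*u*v^2 + 4*A1*e^3*u^4 + 40*A1*e^3*d^3*u^2*v + 10*A1*e^4*d^2*u^3 + 6*A0*d^2*u^2*v^3 + 12*A0*e*d*u^3*v^2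 + 3*A0*e^2*u^4*v) + x^0*y^14*(6*d^2*u^2*v^4 + 16*e*d*u^3*v^3 + 6*e^2*u^4*v^2 + 10*b1*u^3*v^3 + 20*b1*d^3*u*v^4 + 120*b1*e*d^2*u^2*v^3 + 5*b1*e*d^5*v^4 + 120*b1*e^2*d*u^3*v^2 + 50*b1*e^2*d^4*u*v^3 + 20*b1*e^3*u^4*v + 100*b1*e^3*d^3*u^2*v^2 + 50*b1*e^4*d^2*u^3*v + 5*b1*e^5*d*u^4 + 24*A1*d^2*u^2*v^3 + A1*d^5*v^4 + 48*A1*e*d*u^3*v^2 + 20*A1*e*d^4*u*v^3 + 12*A1*e^2*u^4*v + 60*A1*e^2*d^3*u^2*v^2 + 40*A1*e^3*d^2*u^3*v + 5*A1*e^4*d*u^4 + 4*A0*d*u^3*v^3 + 3*A0*e*u^4*v^2) + x^0*y^15*(4*d*u^3*v^4 + 4*e*u^4*v^3 + 30*b1*d^2*u^2*v^4 + b1*d^5*v^5 + 80*b1*e*d*u^3*v^3 + 25*b1*e*d^4*u*v^4 + 30*b1*e^2*u^4*v^2 + 100*b1*e^2*d^3*u^2*v^3 + 100*b1*e^3*d^2*u^3*v^2 + 25*b1*e^4*d*u^4*v + b1*e^5*u^5 + 16*A1*d*u^3*v^3 + 5*A1*d^4*u*v^4 + 12*A1*e*u^4*v^2 + 40*A1*e*d^3*u^2*v^3 + 60*A1*e^2*d^2*u^3*v^2 + 20*A1*e^3*d*u^4*v + A1*e^4*u^5 + A0*u^4*v^3) + x^0*y^16*(u^4*v^4 + 20*b1*d*u^3*v^4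 + 5*b1*d^4*u*v^5 + 20*b1*e*u^4*v^3 + 50*b1*e*d^3*u^2*v^4 + 100*b1*e^2*d^2*u^3*v^3 + 50*b1*e^3*d*u^4*v^2 + 5*b1*e^4*u^5*v + 4*A1*u^4*v^3 + 10*A1*d^3*u^2*v^4 + 40*A1*e*d^2*u^3*v^3 + 30*A1*e^2*d*u^4*v^2 + 4*A1*e^3*u^5*v) + x^0*y^17*(5*b1*u^4*v^4 + 10*b1*d^3*u^2*v^5 + 50*b1*e*d^2*u^3*v^4 + 50*b1*e^2*d*u^4*v^3 + 10*b1*e^3*u^5*v^2 + 10*A1*d^2*u^3*v^4 + 20*A1*e*d*u^4*v^3 + 6*A1*e^2*u^5*v^2) + x^0*y^18*(10*b1*d^2*u^3*v^5 + 25*b1*e*d*u^4*v^4 + 10*b1*e^2*u^5*v^3 + 5*A1*d*u^4*v^4 + 4*A1*e*u^5*v^3) + x^0*y^19*(5*b1*d*u^4*v^5 + 5*b1*e*u^5*v^4 + A1*u^5*v^4) + x^0*y^20*(b1*u^5*v^5) + x^1*y^5*(6*d*u + 24*e*d*v + 12*e^2*u - 4*e^3*v + 12*e^3*d^2 + 5*b1*v + 20*b1*e^2*d - 5*b1*e^4 + 8*A1*e*d - 4*A1*e^3 + 6*A0*d*v + 6*A0*e*u - 3*A0*e^2*v + 9*A0*e^2*d^2) + x^1*y^6*(3*u^2 + 12*d*v^2 + 24*e*u*v + 36*e^2*d^2*v + 24*e^3*d*u + 4*e^4*d^3 + 40*b1*e*d*v + 20*b1*e^2*u + 30*b1*e^3*d^2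 + 8*A1*d*v + 8*A1*e*u + 18*A1*e^2*d^2 + 6*A0*u*v + 18*A0*e*d^2*v + 18*A0*e^2*d*u + 4*A0*e^3*d^3) + x^1*y^7*(12*u*v^2 + 36*e*d^2*v^2 + 72*e^2*d*u*v + 12*e^3*u^2 + 16*e^3*d^3*v + 12*e^4*d^2*u + 20*b1*d*v^2 + 40*b1*e*u*v + 90*b1*e^2*d^2*v + 60*b1*e^3*d*u + 20*b1*e^4*d^3 + 8*A1*u*v + 36*A1*e*d^2*v + 36*A1*e^2*d*u + 16*A1*e^3*d^3 + 9*A0*d^2*v^2 + 36*A0*e*d*u*v + 9*A0*e^2*u^2 + 12*A0*e^2*d^3*v + 12*A0*e^3*d^2*u) + x^1*y^8*(12*d^2*v^3 + 72*e*d*u*v^2 + 36*e^2*u^2*v + 24*e^2*d^3*v^2 + 48*e^3*d^2*u*v + 12*e^4*d*u^2 + 20*b1*u*v^2 + 90*b1*e*d^2*v^2 + 180*b1*e^2*d*u*v + 30*b1*e^3*u^2 + 80*b1*e^3*d^3*v + 60*b1*e^4*d^2*u + 5*b1*e^5*d^4 + 18*A1*d^2*v^2 + 72*A1*e*d*u*v + 18*A1*e^2*u^2 + 48*A1*e^2*d^3*v + 48*A1*e^3*d^2*u + 5*A1*e^4*d^4 + 18*A0*d*u*v^2 + 18*A0*e*u^2*v + 12*A0*e*d^3*v^2 + 36*A0*e^2*d^2*u*v + 12*A0*e^3*d*u^2) + x^1*y^9*(24*d*u*v^3 + 36*e*u^2*v^2 + 16*e*d^3*v^3 + 72*e^2*d^2*u*v^2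 + 48*e^3*d*u^2*v + 4*e^4*u^3 + 30*b1*d^2*v^3 + 180*b1*e*d*u*v^2 + 90*b1*e^2*u^2*v + 120*b1*e^2*d^3*v^2 + 240*b1*e^3*d^2*u*v + 60*b1*e^4*d*u^2 + 25*b1*e^4*d^4*v + 20*b1*e^5*d^3*u + 36*A1*d*u*v^2 + 36*A1*e*u^2*v + 48*A1*e*d^3*v^2 + 144*A1*e^2*d^2*u*v + 48*A1*e^3*d*u^2 + 20*A1*e^3*d^4*v + 20*A1*e^4*d^3*u + 9*A0*u^2*v^2 + 4*A0*d^3*v^3 + 36*A0*e*d^2*u*v^2 + 36*A0*e^2*d*u^2*v + 4*A0*e^3*u^3) + x^1*y^10*(12*u^2*v^3 + 4*d^3*v^4 + 48*e*d^2*u*v^3 + 72*e^2*d*u^2*v^2 + 16*e^3*u^3*v + 60*b1*d*u*v^3 + 90*b1*e*u^2*v^2 + 80*b1*e*d^3*v^3 + 360*b1*e^2*d^2*u*v^2 + 240*b1*e^3*d*u^2*v + 50*b1*e^3*d^4*v^2 + 20*b1*e^4*u^3 + 100*b1*e^4*d^3*u*v + 30*b1*e^5*d^2*u^2 + 18*A1*u^2*v^2 + 16*A1*d^3*v^3 + 144*A1*e*d^2*u*v^2 + 144*A1*e^2*d*u^2*v + 30*A1*e^2*d^4*v^2 + 16*A1*e^3*u^3 + 80*A1*e^3*d^3*u*v + 30*A1*e^4*d^2*u^2 + 12*A0*d^2*u*v^3 + 36*A0*e*d*u^2*v^2 + 12*A0*e^2*u^3*v) + x^1*y^11*(12*d^2*u*v^4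 + 48*e*d*u^2*v^3 + 24*e^2*u^3*v^2 + 30*b1*u^2*v^3 + 20*b1*d^3*v^4 + 240*b1*e*d^2*u*v^3 + 360*b1*e^2*d*u^2*v^2 + 50*b1*e^2*d^4*v^3 + 80*b1*e^3*u^3*v + 200*b1*e^3*d^3*u*v^2 + 150*b1*e^4*d^2*u^2*v + 20*b1*e^5*d*u^3 + 48*A1*d^2*u*v^3 + 144*A1*e*d*u^2*v^2 + 20*A1*e*d^4*v^3 + 48*A1*e^2*u^3*v + 120*A1*e^2*d^3*u*v^2 + 120*A1*e^3*d^2*u^2*v + 20*A1*e^4*d*u^3 + 12*A0*d*u^2*v^3 + 12*A0*e*u^3*v^2) + x^1*y^12*(12*d*u^2*v^4 + 16*e*u^3*v^3 + 60*b1*d^2*u*v^4 + 240*b1*e*d*u^2*v^3 + 25*b1*e*d^4*v^4 + 120*b1*e^2*u^3*v^2 + 200*b1*e^2*d^3*u*v^3 + 300*b1*e^3*d^2*u^2*v^2 + 100*b1*e^4*d*u^3*v + 5*b1*e^5*u^4 + 48*A1*d*u^2*v^3 + 5*A1*d^4*v^4 + 48*A1*e*u^3*v^2 + 80*A1*e*d^3*u*v^3 + 180*A1*e^2*d^2*u^2*v^2 + 80*A1*e^3*d*u^3*v + 5*A1*e^4*u^4 + 4*A0*u^3*v^3) + x^1*y^13*(4*u^3*v^4 + 60*b1*d*u^2*v^4 + 5*b1*d^4*v^5 + 80*b1*e*u^3*v^3 + 100*b1*e*d^3*u*v^4 + 300*b1*e^2*d^2*u^2*v^3 + 200*b1*e^3*d*u^3*v^2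 + 25*b1*e^4*u^4*v + 16*A1*u^3*v^3 + 20*A1*d^3*u*v^4 + 120*A1*e*d^2*u^2*v^3 + 120*A1*e^2*d*u^3*v^2 + 20*A1*e^3*u^4*v) + x^1*y^14*(20*b1*u^3*v^4 + 20*b1*d^3*u*v^5 + 150*b1*e*d^2*u^2*v^4 + 200*b1*e^2*d*u^3*v^3 + 50*b1*e^3*u^4*v^2 + 30*A1*d^2*u^2*v^4 + 80*A1*e*d*u^3*v^3 + 30*A1*e^2*u^4*v^2) + x^1*y^15*(30*b1*d^2*u^2*v^5 + 100*b1*e*d*u^3*v^4 + 50*b1*e^2*u^4*v^3 + 20*A1*d*u^3*v^4 + 20*A1*e*u^4*v^3) + x^1*y^16*(20*b1*d*u^3*v^5 + 25*b1*e*u^4*v^4 + 5*A1*u^4*v^4) + x^1*y^17*(5*b1*u^4*v^5) + x^2*y^4*(6*v^2 + 36*e^2*d*v + 12*e^3*u + 6*e^4*d^2 + 20*b1*e*v + 30*b1*e^3*d - b1*e^5 + 4*A1*v + 18*A1*e^2*d - A1*e^4 + 18*A0*e*d*v + 9*A0*e^2*u + 6*A0*e^3*d^2) + x^2*y^5*(36*e*d*v^2 + 36*e^2*u*v + 24*e^3*d^2*v + 12*e^4*d*u + 10*b1*v^2 + 90*b1*e^2*d*v + 30*b1*e^3*u + 30*b1*e^4*d^2 + 36*A1*e*d*v + 18*A1*e^2*u + 24*A1*e^3*d^2 + 9*A0*d*v^2 + 18*A0*e*u*v + 18*A0*e^2*d^2*v + 12*A0*e^3*d*u) + x^2*y^6*(12*d*v^3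 + 36*e*u*v^2 + 36*e^2*d^2*v^2 + 48*e^3*d*u*v + 6*e^4*u^2 + 90*b1*e*d*v^2 + 90*b1*e^2*u*v + 120*b1*e^3*d^2*v + 60*b1*e^4*d*u + 10*b1*e^5*d^3 + 18*A1*d*v^2 + 36*A1*e*u*v + 72*A1*e^2*d^2*v + 48*A1*e^3*d*u + 10*A1*e^4*d^3 + 9*A0*u*v^2 + 18*A0*e*d^2*v^2 + 36*A0*e^2*d*u*v + 6*A0*e^3*u^2) + x^2*y^7*(12*u*v^3 + 24*e*d^2*v^3 + 72*e^2*d*u*v^2 + 24*e^3*u^2*v + 30*b1*d*v^3 + 90*b1*e*u*v^2 + 180*b1*e^2*d^2*v^2 + 240*b1*e^3*d*u*v + 30*b1*e^4*u^2 + 50*b1*e^4*d^3*v + 30*b1*e^5*d^2*u + 18*A1*u*v^2 + 72*A1*e*d^2*v^2 + 144*A1*e^2*d*u*v + 24*A1*e^3*u^2 + 40*A1*e^3*d^3*v + 30*A1*e^4*d^2*u + 6*A0*d^2*v^3 + 36*A0*e*d*u*v^2 + 18*A0*e^2*u^2*v) + x^2*y^8*(6*d^2*v^4 + 48*e*d*u*v^3 + 36*e^2*u^2*v^2 + 30*b1*u*v^3 + 120*b1*e*d^2*v^3 + 360*b1*e^2*d*u*v^2 + 120*b1*e^3*u^2*v + 100*b1*e^3*d^3*v^2 + 150*b1*e^4*d^2*u*v + 30*b1*e^5*d*u^2 + 24*A1*d^2*v^3 + 144*A1*e*d*u*v^2 + 72*A1*e^2*u^2*v + 60*A1*e^2*d^3*v^2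 + 120*A1*e^3*d^2*u*v + 30*A1*e^4*d*u^2 + 12*A0*d*u*v^3 + 18*A0*e*u^2*v^2) + x^2*y^9*(12*d*u*v^4 + 24*e*u^2*v^3 + 30*b1*d^2*v^4 + 240*b1*e*d*u*v^3 + 180*b1*e^2*u^2*v^2 + 100*b1*e^2*d^3*v^3 + 300*b1*e^3*d^2*u*v^2 + 150*b1*e^4*d*u^2*v + 10*b1*e^5*u^3 + 48*A1*d*u*v^3 + 72*A1*e*u^2*v^2 + 40*A1*e*d^3*v^3 + 180*A1*e^2*d^2*u*v^2 + 120*A1*e^3*d*u^2*v + 10*A1*e^4*u^3 + 6*A0*u^2*v^3) + x^2*y^10*(6*u^2*v^4 + 60*b1*d*u*v^4 + 120*b1*e*u^2*v^3 + 50*b1*e*d^3*v^4 + 300*b1*e^2*d^2*u*v^3 + 300*b1*e^3*d*u^2*v^2 + 50*b1*e^4*u^3*v + 24*A1*u^2*v^3 + 10*A1*d^3*v^4 + 120*A1*e*d^2*u*v^3 + 180*A1*e^2*d*u^2*v^2 + 40*A1*e^3*u^3*v) + x^2*y^11*(30*b1*u^2*v^4 + 10*b1*d^3*v^5 + 150*b1*e*d^2*u*v^4 + 300*b1*e^2*d*u^2*v^3 + 100*b1*e^3*u^3*v^2 + 30*A1*d^2*u*v^4 + 120*A1*e*d*u^2*v^3 + 60*A1*e^2*u^3*v^2) + x^2*y^12*(30*b1*d^2*u*v^5 + 150*b1*e*d*u^2*v^4 + 100*b1*e^2*u^3*v^3 + 30*A1*d*u^2*v^4 + 40*A1*e*u^3*v^3)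 + x^2*y^13*(30*b1*d*u^2*v^5 + 50*b1*e*u^3*v^4 + 10*A1*u^3*v^4) + x^2*y^14*(10*b1*u^3*v^5) + x^3*y^3*(12*e*v^2 + 16*e^3*d*v + 4*e^4*u + 30*b1*e^2*v + 20*b1*e^4*d + 12*A1*e*v + 16*A1*e^3*d + 3*A0*v^2 + 12*A0*e^2*d*v + 4*A0*e^3*u) + x^3*y^4*(4*v^3 + 24*e^2*d*v^2 + 16*e^3*u*v + 30*b1*e*v^2 + 80*b1*e^3*d*v + 20*b1*e^4*u + 10*b1*e^5*d^2 + 6*A1*v^2 + 48*A1*e^2*d*v + 16*A1*e^3*u + 10*A1*e^4*d^2 + 12*A0*e*d*v^2 + 12*A0*e^2*u*v) + x^3*y^5*(16*e*d*v^3 + 24*e^2*u*v^2 + 10*b1*v^3 + 120*b1*e^2*d*v^2 + 80*b1*e^3*u*v + 50*b1*e^4*d^2*v + 20*b1*e^5*d*u + 48*A1*e*d*v^2 + 48*A1*e^2*u*v + 40*A1*e^3*d^2*v + 20*A1*e^4*d*u + 4*A0*d*v^3 + 12*A0*e*u*v^2) + x^3*y^6*(4*d*v^4 + 16*e*u*v^3 + 80*b1*e*d*v^3 + 120*b1*e^2*u*v^2 + 100*b1*e^3*d^2*v^2 + 100*b1*e^4*d*u*v + 10*b1*e^5*u^2 + 16*A1*d*v^3 + 48*A1*e*u*v^2 + 60*A1*e^2*d^2*v^2 + 80*A1*e^3*d*u*v + 10*A1*e^4*u^2 + 4*A0*u*v^3) + x^3*y^7*(4*u*v^4 + 20*b1*d*v^4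 + 80*b1*e*u*v^3 + 100*b1*e^2*d^2*v^3 + 200*b1*e^3*d*u*v^2 + 50*b1*e^4*u^2*v + 16*A1*u*v^3 + 40*A1*e*d^2*v^3 + 120*A1*e^2*d*u*v^2 + 40*A1*e^3*u^2*v) + x^3*y^8*(20*b1*u*v^4 + 50*b1*e*d^2*v^4 + 200*b1*e^2*d*u*v^3 + 100*b1*e^3*u^2*v^2 + 10*A1*d^2*v^4 + 80*A1*e*d*u*v^3 + 60*A1*e^2*u^2*v^2) + x^3*y^9*(10*b1*d^2*v^5 + 100*b1*e*d*u*v^4 + 100*b1*e^2*u^2*v^3 + 20*A1*d*u*v^4 + 40*A1*e*u^2*v^3) + x^3*y^10*(20*b1*d*u*v^5 + 50*b1*e*u^2*v^4 + 10*A1*u^2*v^4) + x^3*y^11*(10*b1*u^2*v^5) + x^4*y^2*(6*e^2*v^2 + 20*b1*e^3*v + 5*b1*e^5*d + 12*A1*e^2*v + 5*A1*e^4*d + 3*A0*e*v^2) + x^4*y^3*(4*e*v^3 + 30*b1*e^2*v^2 + 25*b1*e^4*d*v + 5*b1*e^5*u + 12*A1*e*v^2 + 20*A1*e^3*d*v + 5*A1*e^4*u + A0*v^3) + x^4*y^4*(v^4 + 20*b1*e*v^3 + 50*b1*e^3*d*v^2 + 25*b1*e^4*u*v + 4*A1*v^3 + 30*A1*e^2*d*v^2 + 20*A1*e^3*u*v) + x^4*y^5*(5*b1*v^4 + 50*b1*e^2*d*v^3 + 50*b1*e^3*u*v^2 + 20*A1*e*d*v^3 + 30*A1*e^2*u*v^2)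 + x^4*y^6*(25*b1*e*d*v^4 + 50*b1*e^2*u*v^3 + 5*A1*d*v^4 + 20*A1*e*u*v^3) + x^4*y^7*(5*b1*d*v^5 + 25*b1*e*u*v^4 + 5*A1*u*v^4) + x^4*y^8*(5*b1*u*v^5) + x^5*y^1*(5*b1*e^4*v + 4*A1*e^3*v) + x^5*y^2*(10*b1*e^3*v^2 + 6*A1*e^2*v^2) + x^5*y^3*(10*b1*e^2*v^3 + 4*A1*e*v^3) + x^5*y^4*(5*b1*e*v^4 + A1*v^4) + x^5*y^5*(b1*v^5))"
  by algebra

lemma slot2_core:
  fixes x y A0 A1 b1 C0 C1 e d u v K :: "'r::idom"
  shows "((x + d*y^2 + u*y^3)^2*((1 + v*(x + d*y^2 + u*y^3))*y + e*(x + d*y^2 + u*y^3)) + (C0 + C1*((1 + v*(x + d*y^2 + u*y^3))*y + e*(x + d*y^2 + u*y^3)))*((1 + v*(x + d*y^2 + u*y^3))*y + e*(x + d*y^2 + u*y^3))^4) = (x^2*y + K*y^4) + e*(x^3 + y^4) + (x*(C0*e^4 + 5*y*C1*e^4 + 4*y*C0*e^3*v + x*C1*e^5) + y*(d^2 - 3*e*d*K + C1 + 4*C0*e*d - 6*C0*e^2*K + 10*y*C1*e^3 + 12*y*C0*e^2*v + 4*y*C0*e^4*d))*(x^3 + y^4) + (x*(v - d^2 + 3*e*d*K - C1 - 4*C0*e*d + 6*C0*e^2*K + 4*C0*e^3) + y*(3*e*d + 6*C0*e^2 + 3*y*d*v + 3*y*e*u + 10*y*C1*e^2 + 12*y*C0*e*v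 + 12*y*C0*e^3*d))*(x^2*y + K*y^4) + (- K - e + C0)*y^4 + (2*d + 4*C0*e)*(x*y^3) + (- v*K + 2*u + d^2*K - 3*e*d*K^2 + 3*e*d^2 + C1*K + 5*C1*e + 4*C0*v + 4*C0*e*d*K - 6*C0*e^2*K^2 + 12*C0*e^2*d - 4*C0*e^3*K - C0*e^4)*(x*y^4) + (x^0*y^6*(- 3*d*v*K + 2*d*u - 3*e*u*K + e*d^3 + 5*C1*e*d - 10*C1*e^2*K - 10*C1*e^3 + 4*C0*d*v - 12*C0*e*v*K + 4*C0*e*u - 12*C0*e^2*v + 6*C0*e^2*d^2 - 12*C0*e^3*d*K - 4*C0*e^4*d) + x^0*y^7*(u^2 + d^3*v + 3*e*d^2*u + 5*C1*d*v + 5*C1*e*u + 10*C1*e^2*d^2 + 4*C0*u*v + 12*C0*e*d^2*v + 12*C0*e^2*d*u + 4*C0*e^3*d^3) + x^0*y^8*(3*d^2*u*v + 3*e*d*u^2 + 5*C1*u*v + 20*C1*e*d^2*v + 20*C1*e^2*d*u + 10*C1*e^3*d^3 + 6*C0*d^2*v^2 + 24*C0*e*d*u*v + 6*C0*e^2*u^2 + 12*C0*e^2*d^3*v + 12*C0*e^3*d^2*u + C0*e^4*d^4) + x^0*y^9*(3*d*u^2*v + e*u^3 + 10*C1*d^2*v^2 + 40*C1*e*d*u*v + 10*C1*e^2*u^2 + 30*C1*e^2*d^3*v + 30*C1*e^3*d^2*u + 5*C1*e^4*d^4 + 12*C0*d*u*v^2 + 12*C0*e*u^2*v + 12*C0*e*d^3*v^2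 + 36*C0*e^2*d^2*u*v + 12*C0*e^3*d*u^2 + 4*C0*e^3*d^4*v + 4*C0*e^4*d^3*u) + x^0*y^10*(u^3*v + 20*C1*d*u*v^2 + 20*C1*e*u^2*v + 30*C1*e*d^3*v^2 + 90*C1*e^2*d^2*u*v + 30*C1*e^3*d*u^2 + 20*C1*e^3*d^4*v + 20*C1*e^4*d^3*u + C1*e^5*d^5 + 6*C0*u^2*v^2 + 4*C0*d^3*v^3 + 36*C0*e*d^2*u*v^2 + 36*C0*e^2*d*u^2*v + 6*C0*e^2*d^4*v^2 + 4*C0*e^3*u^3 + 16*C0*e^3*d^3*u*v + 6*C0*e^4*d^2*u^2) + x^0*y^11*(10*C1*u^2*v^2 + 10*C1*d^3*v^3 + 90*C1*e*d^2*u*v^2 + 90*C1*e^2*d*u^2*v + 30*C1*e^2*d^4*v^2 + 10*C1*e^3*u^3 + 80*C1*e^3*d^3*u*v + 30*C1*e^4*d^2*u^2 + 5*C1*e^4*d^5*v + 5*C1*e^5*d^4*u + 12*C0*d^2*u*v^3 + 36*C0*e*d*u^2*v^2 + 4*C0*e*d^4*v^3 + 12*C0*e^2*u^3*v + 24*C0*e^2*d^3*u*v^2 + 24*C0*e^3*d^2*u^2*v + 4*C0*e^4*d*u^3) + x^0*y^12*(30*C1*d^2*u*v^3 + 90*C1*e*d*u^2*v^2 + 20*C1*e*d^4*v^3 + 30*C1*e^2*u^3*v + 120*C1*e^2*d^3*u*v^2 + 120*C1*e^3*d^2*u^2*v + 10*C1*e^3*d^5*v^2 + 20*C1*e^4*d*u^3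 + 25*C1*e^4*d^4*u*v + 10*C1*e^5*d^3*u^2 + 12*C0*d*u^2*v^3 + C0*d^4*v^4 + 12*C0*e*u^3*v^2 + 16*C0*e*d^3*u*v^3 + 36*C0*e^2*d^2*u^2*v^2 + 16*C0*e^3*d*u^3*v + C0*e^4*u^4) + x^0*y^13*(30*C1*d*u^2*v^3 + 5*C1*d^4*v^4 + 30*C1*e*u^3*v^2 + 80*C1*e*d^3*u*v^3 + 180*C1*e^2*d^2*u^2*v^2 + 10*C1*e^2*d^5*v^3 + 80*C1*e^3*d*u^3*v + 50*C1*e^3*d^4*u*v^2 + 5*C1*e^4*u^4 + 50*C1*e^4*d^3*u^2*v + 10*C1*e^5*d^2*u^3 + 4*C0*u^3*v^3 + 4*C0*d^3*u*v^4 + 24*C0*e*d^2*u^2*v^3 + 24*C0*e^2*d*u^3*v^2 + 4*C0*e^3*u^4*v) + x^0*y^14*(10*C1*u^3*v^3 + 20*C1*d^3*u*v^4 + 120*C1*e*d^2*u^2*v^3 + 5*C1*e*d^5*v^4 + 120*C1*e^2*d*u^3*v^2 + 50*C1*e^2*d^4*u*v^3 + 20*C1*e^3*u^4*v + 100*C1*e^3*d^3*u^2*v^2 + 50*C1*e^4*d^2*u^3*v + 5*C1*e^5*d*u^4 + 6*C0*d^2*u^2*v^4 + 16*C0*e*d*u^3*v^3 + 6*C0*e^2*u^4*v^2) + x^0*y^15*(30*C1*d^2*u^2*v^4 + C1*d^5*v^5 + 80*C1*e*d*u^3*v^3 + 25*C1*e*d^4*u*v^4 + 30*C1*e^2*u^4*v^2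 + 100*C1*e^2*d^3*u^2*v^3 + 100*C1*e^3*d^2*u^3*v^2 + 25*C1*e^4*d*u^4*v + C1*e^5*u^5 + 4*C0*d*u^3*v^4 + 4*C0*e*u^4*v^3) + x^0*y^16*(20*C1*d*u^3*v^4 + 5*C1*d^4*u*v^5 + 20*C1*e*u^4*v^3 + 50*C1*e*d^3*u^2*v^4 + 100*C1*e^2*d^2*u^3*v^3 + 50*C1*e^3*d*u^4*v^2 + 5*C1*e^4*u^5*v + C0*u^4*v^4) + x^0*y^17*(5*C1*u^4*v^4 + 10*C1*d^3*u^2*v^5 + 50*C1*e*d^2*u^3*v^4 + 50*C1*e^2*d*u^4*v^3 + 10*C1*e^3*u^5*v^2) + x^0*y^18*(10*C1*d^2*u^3*v^5 + 25*C1*e*d*u^4*v^4 + 10*C1*e^2*u^5*v^3) + x^0*y^19*(5*C1*d*u^4*v^5 + 5*C1*e*u^5*v^4) + x^0*y^20*(C1*u^5*v^5) + x^1*y^5*(3*d^2*v + 6*e*d*u + 5*C1*v + 20*C1*e^2*d - 5*C1*e^4 + 24*C0*e*d*v + 12*C0*e^2*u - 4*C0*e^3*v + 12*C0*e^3*d^2) + x^1*y^6*(6*d*u*v + 3*e*u^2 + 40*C1*e*d*v + 20*C1*e^2*u + 30*C1*e^3*d^2 + 12*C0*d*v^2 + 24*C0*e*u*v + 36*C0*e^2*d^2*v + 24*C0*e^3*d*u + 4*C0*e^4*d^3) + x^1*y^7*(3*u^2*v + 20*C1*d*v^2 + 40*C1*e*u*v + 90*C1*e^2*d^2*v + 60*C1*e^3*d*u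 + 20*C1*e^4*d^3 + 12*C0*u*v^2 + 36*C0*e*d^2*v^2 + 72*C0*e^2*d*u*v + 12*C0*e^3*u^2 + 16*C0*e^3*d^3*v + 12*C0*e^4*d^2*u) + x^1*y^8*(20*C1*u*v^2 + 90*C1*e*d^2*v^2 + 180*C1*e^2*d*u*v + 30*C1*e^3*u^2 + 80*C1*e^3*d^3*v + 60*C1*e^4*d^2*u + 5*C1*e^5*d^4 + 12*C0*d^2*v^3 + 72*C0*e*d*u*v^2 + 36*C0*e^2*u^2*v + 24*C0*e^2*d^3*v^2 + 48*C0*e^3*d^2*u*v + 12*C0*e^4*d*u^2) + x^1*y^9*(30*C1*d^2*v^3 + 180*C1*e*d*u*v^2 + 90*C1*e^2*u^2*v + 120*C1*e^2*d^3*v^2 + 240*C1*e^3*d^2*u*v + 60*C1*e^4*d*u^2 + 25*C1*e^4*d^4*v + 20*C1*e^5*d^3*u + 24*C0*d*u*v^3 + 36*C0*e*u^2*v^2 + 16*C0*e*d^3*v^3 + 72*C0*e^2*d^2*u*v^2 + 48*C0*e^3*d*u^2*v + 4*C0*e^4*u^3) + x^1*y^10*(60*C1*d*u*v^3 + 90*C1*e*u^2*v^2 + 80*C1*e*d^3*v^3 + 360*C1*e^2*d^2*u*v^2 + 240*C1*e^3*d*u^2*v + 50*C1*e^3*d^4*v^2 + 20*C1*e^4*u^3 + 100*C1*e^4*d^3*u*v + 30*C1*e^5*d^2*u^2 + 12*C0*u^2*v^3 + 4*C0*d^3*v^4 + 48*C0*e*d^2*u*v^3 + 72*C0*e^2*d*u^2*v^2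 + 16*C0*e^3*u^3*v) + x^1*y^11*(30*C1*u^2*v^3 + 20*C1*d^3*v^4 + 240*C1*e*d^2*u*v^3 + 360*C1*e^2*d*u^2*v^2 + 50*C1*e^2*d^4*v^3 + 80*C1*e^3*u^3*v + 200*C1*e^3*d^3*u*v^2 + 150*C1*e^4*d^2*u^2*v + 20*C1*e^5*d*u^3 + 12*C0*d^2*u*v^4 + 48*C0*e*d*u^2*v^3 + 24*C0*e^2*u^3*v^2) + x^1*y^12*(60*C1*d^2*u*v^4 + 240*C1*e*d*u^2*v^3 + 25*C1*e*d^4*v^4 + 120*C1*e^2*u^3*v^2 + 200*C1*e^2*d^3*u*v^3 + 300*C1*e^3*d^2*u^2*v^2 + 100*C1*e^4*d*u^3*v + 5*C1*e^5*u^4 + 12*C0*d*u^2*v^4 + 16*C0*e*u^3*v^3) + x^1*y^13*(60*C1*d*u^2*v^4 + 5*C1*d^4*v^5 + 80*C1*e*u^3*v^3 + 100*C1*e*d^3*u*v^4 + 300*C1*e^2*d^2*u^2*v^3 + 200*C1*e^3*d*u^3*v^2 + 25*C1*e^4*u^4*v + 4*C0*u^3*v^4) + x^1*y^14*(20*C1*u^3*v^4 + 20*C1*d^3*u*v^5 + 150*C1*e*d^2*u^2*v^4 + 200*C1*e^2*d*u^3*v^3 + 50*C1*e^3*u^4*v^2) + x^1*y^15*(30*C1*d^2*u^2*v^5 + 100*C1*e*d*u^3*v^4 + 50*C1*e^2*u^4*v^3) + x^1*y^16*(20*C1*d*u^3*v^5 + 25*C1*e*u^4*v^4) + x^1*y^17*(5*C1*u^4*v^5)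 + x^2*y^4*(3*u*v + 20*C1*e*v + 30*C1*e^3*d - C1*e^5 + 6*C0*v^2 + 36*C0*e^2*d*v + 12*C0*e^3*u + 6*C0*e^4*d^2) + x^2*y^5*(10*C1*v^2 + 90*C1*e^2*d*v + 30*C1*e^3*u + 30*C1*e^4*d^2 + 36*C0*e*d*v^2 + 36*C0*e^2*u*v + 24*C0*e^3*d^2*v + 12*C0*e^4*d*u) + x^2*y^6*(90*C1*e*d*v^2 + 90*C1*e^2*u*v + 120*C1*e^3*d^2*v + 60*C1*e^4*d*u + 10*C1*e^5*d^3 + 12*C0*d*v^3 + 36*C0*e*u*v^2 + 36*C0*e^2*d^2*v^2 + 48*C0*e^3*d*u*v + 6*C0*e^4*u^2) + x^2*y^7*(30*C1*d*v^3 + 90*C1*e*u*v^2 + 180*C1*e^2*d^2*v^2 + 240*C1*e^3*d*u*v + 30*C1*e^4*u^2 + 50*C1*e^4*d^3*v + 30*C1*e^5*d^2*u + 12*C0*u*v^3 + 24*C0*e*d^2*v^3 + 72*C0*e^2*d*u*v^2 + 24*C0*e^3*u^2*v) + x^2*y^8*(30*C1*u*v^3 + 120*C1*e*d^2*v^3 + 360*C1*e^2*d*u*v^2 + 120*C1*e^3*u^2*v + 100*C1*e^3*d^3*v^2 + 150*C1*e^4*d^2*u*v + 30*C1*e^5*d*u^2 + 6*C0*d^2*v^4 + 48*C0*e*d*u*v^3 + 36*C0*e^2*u^2*v^2) + x^2*y^9*(30*C1*d^2*v^4 + 240*C1*e*d*u*v^3 + 180*C1*e^2*u^2*v^2 +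 100*C1*e^2*d^3*v^3 + 300*C1*e^3*d^2*u*v^2 + 150*C1*e^4*d*u^2*v + 10*C1*e^5*u^3 + 12*C0*d*u*v^4 + 24*C0*e*u^2*v^3) + x^2*y^10*(60*C1*d*u*v^4 + 120*C1*e*u^2*v^3 + 50*C1*e*d^3*v^4 + 300*C1*e^2*d^2*u*v^3 + 300*C1*e^3*d*u^2*v^2 + 50*C1*e^4*u^3*v + 6*C0*u^2*v^4) + x^2*y^11*(30*C1*u^2*v^4 + 10*C1*d^3*v^5 + 150*C1*e*d^2*u*v^4 + 300*C1*e^2*d*u^2*v^3 + 100*C1*e^3*u^3*v^2) + x^2*y^12*(30*C1*d^2*u*v^5 + 150*C1*e*d*u^2*v^4 + 100*C1*e^2*u^3*v^3) + x^2*y^13*(30*C1*d*u^2*v^5 + 50*C1*e*u^3*v^4) + x^2*y^14*(10*C1*u^3*v^5) + x^3*y^3*(30*C1*e^2*v + 20*C1*e^4*d + 12*C0*e*v^2 + 16*C0*e^3*d*v + 4*C0*e^4*u) + x^3*y^4*(30*C1*e*v^2 + 80*C1*e^3*d*v + 20*C1*e^4*u + 10*C1*e^5*d^2 + 4*C0*v^3 + 24*C0*e^2*d*v^2 + 16*C0*e^3*u*v) + x^3*y^5*(10*C1*v^3 + 120*C1*e^2*d*v^2 + 80*C1*e^3*u*v + 50*C1*e^4*d^2*v + 20*C1*e^5*d*u + 16*C0*e*d*v^3 + 24*C0*e^2*u*v^2) + x^3*y^6*(80*C1*e*d*v^3 + 120*C1*e^2*u*v^2 + 100*C1*e^3*d^2*v^2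 + 100*C1*e^4*d*u*v + 10*C1*e^5*u^2 + 4*C0*d*v^4 + 16*C0*e*u*v^3) + x^3*y^7*(20*C1*d*v^4 + 80*C1*e*u*v^3 + 100*C1*e^2*d^2*v^3 + 200*C1*e^3*d*u*v^2 + 50*C1*e^4*u^2*v + 4*C0*u*v^4) + x^3*y^8*(20*C1*u*v^4 + 50*C1*e*d^2*v^4 + 200*C1*e^2*d*u*v^3 + 100*C1*e^3*u^2*v^2) + x^3*y^9*(10*C1*d^2*v^5 + 100*C1*e*d*u*v^4 + 100*C1*e^2*u^2*v^3) + x^3*y^10*(20*C1*d*u*v^5 + 50*C1*e*u^2*v^4) + x^3*y^11*(10*C1*u^2*v^5) + x^4*y^2*(20*C1*e^3*v + 5*C1*e^5*d + 6*C0*e^2*v^2) + x^4*y^3*(30*C1*e^2*v^2 + 25*C1*e^4*d*v + 5*C1*e^5*u + 4*C0*e*v^3) + x^4*y^4*(20*C1*e*v^3 + 50*C1*e^3*d*v^2 + 25*C1*e^4*u*v + C0*v^4) + x^4*y^5*(5*C1*v^4 + 50*C1*e^2*d*v^3 + 50*C1*e^3*u*v^2) + x^4*y^6*(25*C1*e*d*v^4 + 50*C1*e^2*u*v^3) + x^4*y^7*(5*C1*d*v^5 + 25*C1*e*u*v^4) + x^4*y^8*(5*C1*u*v^5) + x^5*y^1*(5*C1*e^4*v) + x^5*y^2*(10*C1*e^3*v^2) + x^5*y^3*(10*C1*e^2*v^3) + x^5*y^4*(5*C1*e*v^4) + x^5*y^5*(C1*v^5))"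
  by algebra

lemma split1:
  fixes P Q A0 A1 b1 At bt :: "'r::idom"
  shows "P^3 + (A0 + A1*Q + Q^2*At)*P*Q^3 + (1 + b1*Q + Q^2*bt)*Q^4
       = (P^3 + (A0 + A1*Q)*P*Q^3 + (1 + b1*Q)*Q^4) + (Q^2*At*P*Q^3 + Q^2*bt*Q^4)"
  by algebra

lemma split2:
  fixes P Q A0 A1 b1 At bt C0 C1 Ct e :: "'r::idom"
  shows "(P^2*Q + (C0 + C1*Q + Q^2*Ct)*Q^4) - e*(P^3 + (A0 + A1*Q + Q^2*At)*P*Q^3 + (1 + b1*Q + Q^2*bt)*Q^4)
       = ((P^2*Q + (C0 + C1*Q)*Q^4) - e*(P^3 + (A0 + A1*Q)*P*Q^3 + (1 + b1*Q)*Q^4))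
         + (Q^2*Ct*Q^4 - e*(Q^2*At*P*Q^3 + Q^2*bt*Q^4))"
  by algebra

lemma in_max_xy: "in_max (vx * a + vy * b)"
  by (simp add: in_max_def mult_00 vx_nth vy_nth)

lemma finish1:
  fixes K :: "'a::field"
  assumes "G = C + R"
    and "C = NF1 + (vx*ax + vy*ay)*NF1 + (vx*bx + vy*cy)*NF2 K + c13*(vx*vy^3) + c14*(vx*vy^4) + H"
    and "c13 = 0" "c14 = 0" "ordge 6 H" "ordge 6 R"
  shows "\<exists>\<alpha> \<beta>. in_max \<alpha> \<and> in_max \<beta> \<and> G = (1 + \<alpha>) * NF1 + \<beta> * NF2 K"
proof -
  have "inmI K (H + R)" using assms(5,6) by (intro ordge6_inmI ordge_add)
  then obtain a' b' where ab: "in_max a'" "in_max b'" "H + R = a' * NF1 + b' * NF2 K"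
    unfolding inmI_def by blast
  have "G = (1 + (vx*ax + vy*ay + a')) * NF1 + (vx*bx + vy*cy + b') * NF2 K"
    using assms(1-4) ab(3) by (simp add: algebra_simps)
  then show ?thesis using ab(1,2) in_max_add in_max_xy by blast
qed

lemma finish2:
  fixes K :: "'a::field"
  assumes "G = (C2 - E * C1) + R"
    and "C1 = NF1 + (vx*ax1 + vy*ay1)*NF1 + (vx*bx1 + vy*cy1)*NF2 K + c13*(vx*vy^3) + c14*(vx*vy^4) + H1"
    and "C2 = NF2 K + E*NF1 + (vx*ax + vy*ay)*NF1 + (vx*bx + vy*cy)*NF2 K + c04*vy^4 + d13*(vx*vy^3) + d14*(vx*vy^4) + H2"
    and "c13 = 0" "c14 = 0" "c04 = 0" "d13 = 0" "d14 = 0" "ordge 6 H1" "ordge 6 H2" "ordge 6 R"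
  shows "\<exists>\<alpha> \<beta>. in_max \<alpha> \<and> in_max \<beta> \<and> G = \<alpha> * NF1 + (1 + \<beta>) * NF2 K"
proof -
  have "ordge 6 (H2 - E * H1 + R)"
    using assms(9-11) by (intro ordge_add ordge_diff ordge_multL)
  then have "inmI K (H2 - E * H1 + R)" by (rule ordge6_inmI)
  then obtain a' b' where ab: "in_max a'" "in_max b'" "H2 - E * H1 + R = a' * NF1 + b' * NF2 K"
    unfolding inmI_def by blast
  have "G = ((vx*(ax - E*ax1) + vy*(ay - E*ay1)) + a') * NF1 + (1 + ((vx*(bx - E*bx1) + vy*(cy - E*cy1)) + b')) * NF2 K"
  proof -
    have "G = (C2 - E * C1) + R" by (rule assms(1))
    also have "\<dots> = ((vx*(ax - E*ax1) + vy*(ay - E*ay1))) * NF1 + (1 + (vx*(bx - E*bx1) + vy*(cy - E*cy1))) * NF2 K + (H2 - E * H1 + R)"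
      unfolding assms(2,3) using assms(4-8) by (simp add: algebra_simps)
    also have "\<dots> = ((vx*(ax - E*ax1) + vy*(ay - E*ay1)) + a') * NF1 + (1 + ((vx*(bx - E*bx1) + vy*(cy - E*cy1)) + b')) * NF2 K"
      using ab(3) by (simp add: algebra_simps)
    finally show ?thesis .
  qed
  then show ?thesis using ab(1,2) in_max_add in_max_xy by blast
qed



lemma of_y_add: "of_y (a + b) = (of_y a + of_y b :: 'a::comm_ring_1 bips)"
  by (simp add: of_y_def)
lemma of_y_mult: "of_y (a * b) = (of_y a * of_y b :: 'a::comm_ring_1 bips)"
  by (simp add: of_y_def)
lemma of_y_const: "of_y (fps_const c) = (cst c :: 'a::comm_ring_1 bips)"
  by (simp add: of_y_def cst_def)
lemma of_y_X: "of_y fps_X = (vy :: 'a::comm_ring_1 bips)"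
  by (simp add: of_y_def vy_def)
lemma of_y_Xpow: "of_y (fps_X ^ k) = (vy ^ k :: 'a::comm_ring_1 bips)"
  by (simp add: of_y_def vy_def)

lemma of_y_decomp:
  "of_y a = (cst (a$0) + cst (a$1) * vy + vy^2 * of_y (fps_shift 2 a) :: 'a::comm_ring_1 bips)"
proof -
  have "a = (\<Sum>i<2. fps_const (a$i) * fps_X^i) + fps_X^2 * fps_shift 2 a"
    by (rule fps_poly_decomp)
  also have "\<dots> = fps_const (a$0) + fps_const (a$1) * fps_X + fps_X^2 * fps_shift 2 a"
    by (simp add: numeral_2_eq_2)
  finally have "of_y a = of_y (fps_const (a$0) + fps_const (a$1) * fps_X + fps_X^2 * fps_shift 2 a)"
    by simp
  then show ?thesis by (simp add: of_y_add of_y_mult of_y_const of_y_X of_y_Xpow)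
qed

lemma in_max_ordge1: "in_max h \<Longrightarrow> ordge 1 h"
  by (simp add: in_max_ordge)

lemmas hom_simps = hom_add hom_mult hom_power hom_cst hom_diff hom_1

lemma main_b1:
  fixes A b C :: "'a::field fps"
  assumes b0: "b $ 0 = 1" and two: "(2::'a) \<noteq> 0"
  shows "\<exists>K. contact_equiv (vx^3 + of_y A * vx * vy^3 + of_y b * vy^4, vx^2 * vy + of_y C * vy^4) (NF1, NF2 K)"
proof -
  have four: "(4::'a) \<noteq> 0" using two by (metis mult_eq_0_iff numeral_Bit0 one_add_one numeral_One mult_2)
  define a0 where "a0 = A$0"
  define a1 where "a1 = A$1"
  define bb1 where "bb1 = b$1"
  define c0 where "c0 = C$0"
  define c1 where "c1 = C$1"
  define ee where "ee = - a0 / 4"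
  define kk where "kk = c0 - ee"
  define dd where "dd = - 2 * c0 * ee"
  define vv where "vv = - (- 3*dd*kk^2 + 3*dd^2 + 4*ee*dd*kk - 6*ee^2*kk^2 + 12*ee^2*dd - 4*ee^3*kk - ee^4 + bb1*kk + 5*bb1*ee + a1 + a0*dd*kk - 3*a0*ee*kk^2 + 6*a0*ee*dd - 3*a0*ee^2*kk - a0*ee^3) / 4"
  define uu where "uu = - (- vv*kk + dd^2*kk - 3*ee*dd*kk^2 + 3*ee*dd^2 + c1*kk + 5*c1*ee + 4*c0*vv + 4*c0*ee*dd*kk - 6*c0*ee^2*kk^2 + 12*c0*ee^2*dd - 4*c0*ee^3*kk - c0*ee^4) / 2"
  have F13: "(4*ee + a0) = 0" using four by (simp add: ee_def)
  have F14: "(4*vv - 3*dd*kk^2 + 3*dd^2 + 4*ee*dd*kk - 6*ee^2*kk^2 + 12*ee^2*dd - 4*ee^3*kk - ee^4 + bb1*kk + 5*bb1*ee + a1 + a0*dd*kk - 3*a0*ee*kk^2 + 6*a0*ee*dd - 3*a0*ee^2*kk - a0*ee^3) = 0"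
  proof -
    have "4 * vv = - (- 3*dd*kk^2 + 3*dd^2 + 4*ee*dd*kk - 6*ee^2*kk^2 + 12*ee^2*dd - 4*ee^3*kk - ee^4 + bb1*kk + 5*bb1*ee + a1 + a0*dd*kk - 3*a0*ee*kk^2 + 6*a0*ee*dd - 3*a0*ee^2*kk - a0*ee^3)"
      using four unfolding vv_def by simp
    then show ?thesis by algebra
  qed
  have G04: "(- kk - ee + c0) = 0" by (simp add: kk_def)
  have G13: "(2*dd + 4*c0*ee) = 0" by (simp add: dd_def)
  have G14: "(- vv*kk + 2*uu + dd^2*kk - 3*ee*dd*kk^2 + 3*ee*dd^2 + c1*kk + 5*c1*ee + 4*c0*vv + 4*c0*ee*dd*kk - 6*c0*ee^2*kk^2 + 12*c0*ee^2*dd - 4*c0*ee^3*kk - c0*ee^4) = 0"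
  proof -
    have "2 * uu = - (- vv*kk + dd^2*kk - 3*ee*dd*kk^2 + 3*ee*dd^2 + c1*kk + 5*c1*ee + 4*c0*vv + 4*c0*ee*dd*kk - 6*c0*ee^2*kk^2 + 12*c0*ee^2*dd - 4*c0*ee^3*kk - c0*ee^4)"
      using two unfolding uu_def by simp
    then show ?thesis by algebra
  qed
  define P where "P = vx + cst dd * vy^2 + cst uu * vy^3"
  define Q where "Q = (1 + cst vv * P) * vy + cst ee * P"
  define Q1 where "Q1 = (1 + cst vv * vx) * vy + cst ee * vx"
  have "(1 + cst vv * vx :: 'a bips) $ 0 $ 0 \<noteq> 0" by (simp add: cst_nth vx_nth)
  then obtain z :: "'a bips" where z: "(1 + cst vv * vx) * z = 1" using unit_bips by blast
  define Q1' where "Q1' = (vy - cst ee * vx) * z"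
  have oQ1: "ordge 1 Q1" unfolding Q1_def
    by (rule in_max_ordge1) (simp add: in_max_def mult_00 cst_nth vx_nth vy_nth)
  have oQ1': "ordge 1 Q1'" unfolding Q1'_def
    by (rule in_max_ordge1) (simp add: in_max_def mult_00 cst_nth vx_nth vy_nth)
  have oP: "ordge 1 P" unfolding P_def
    by (rule in_max_ordge1) (simp add: in_max_def mult_00 pow_00 cst_nth vx_nth vy_nth)
  define P' where "P' = vx - cst dd * vy^2 - cst uu * vy^3"
  have oP': "ordge 1 P'" unfolding P'_def
    by (rule in_max_ordge1) (simp add: in_max_def mult_00 pow_00 cst_nth vx_nth vy_nth)
  have oQ: "ordge 1 Q" unfolding Q_def
    by (rule in_max_ordge1) (use oP in \<open>simp add: in_max_def mult_00 pow_00 cst_nth vx_nth vy_nth ordge_def\<close>)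
  have hS: "hom (subst vx Q1)" by (rule hom_subst[OF ordge_vx oQ1])
  have hS': "hom (subst vx Q1')" by (rule hom_subst[OF ordge_vx oQ1'])
  have Sz: "subst vx Q1 z = z"
  proof -
    have "subst vx Q1 ((1 + cst vv * vx) * z) = 1" using z hom_1[OF hS] by simp
    then have "(1 + cst vv * vx) * subst vx Q1 z = 1"
      by (simp add: hom_simps[OF hS] subst_vx[OF ordge_vx oQ1])
    then have "z * ((1 + cst vv * vx) * subst vx Q1 z) = z" by simp
    then show ?thesis using z by (simp add: mult.assoc[symmetric] mult.commute[of z])
  qed
  have autS: "is_aut (subst vx Q1)"
  proof (rule aut_subst[OF ordge_vx oQ1 ordge_vx oQ1'])
    show "subst vx Q1 vx = vx" by (rule subst_vx[OF ordge_vx oQ1])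
    show "subst vx Q1' vx = vx" by (rule subst_vx[OF ordge_vx oQ1'])
    show "subst vx Q1 Q1' = vy"
    proof -
      have "subst vx Q1 Q1' = (Q1 - cst ee * vx) * z"
        unfolding Q1'_def by (simp add: hom_mult[OF hS] hom_diff[OF hS] hom_cst[OF hS] subst_vx[OF ordge_vx oQ1] subst_vy[OF ordge_vx oQ1] Sz)
      also have "\<dots> = vy * ((1 + cst vv * vx) * z)" unfolding Q1_def by (simp add: algebra_simps)
      also have "\<dots> = vy" using z by simp
      finally show ?thesis .
    qed
    show "subst vx Q1' Q1 = vy"
    proof -
      have "subst vx Q1' Q1 = (1 + cst vv * vx) * Q1' + cst ee * vx"
        unfolding Q1_def by (simp add: hom_simps[OF hS'] subst_vx[OF ordge_vx oQ1'] subst_vy[OF ordge_vx oQ1'])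
      also have "\<dots> = ((1 + cst vv * vx) * z) * (vy - cst ee * vx) + cst ee * vx"
        unfolding Q1'_def by (simp add: mult_ac)
      also have "\<dots> = vy" using z by simp
      finally show ?thesis .
    qed
  qed
  have hT: "hom (subst P vy)" by (rule hom_subst[OF oP ordge_vy])
  have hT': "hom (subst P' vy)" by (rule hom_subst[OF oP' ordge_vy])
  have autT: "is_aut (subst P vy)"
  proof (rule aut_subst[OF oP ordge_vy oP' ordge_vy])
    show "subst P vy vy = vy" by (rule subst_vy[OF oP ordge_vy])
    show "subst P' vy vy = vy" by (rule subst_vy[OF oP' ordge_vy])
    have "subst P vy P' = P - cst dd * vy^2 - cst uu * vy^3"
      unfolding P'_def by (simp add: hom_simps[OF hT] subst_vx[OF oP ordge_vy] subst_vy[OF oP ordge_vy])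
    then show "subst P vy P' = vx" by (simp add: P_def)
    have "subst P' vy P = P' + cst dd * vy^2 + cst uu * vy^3"
      unfolding P_def by (simp add: hom_simps[OF hT'] hom_add[OF hT'] subst_vx[OF oP' ordge_vy] subst_vy[OF oP' ordge_vy])
    then show "subst P' vy P = vx" by (simp add: P'_def)
  qed
  define \<psi> where "\<psi> = subst P vy \<circ> subst vx Q1"
  have aut: "is_aut \<psi>" unfolding \<psi>_def by (rule is_aut_comp[OF autT autS])
  have h: "hom \<psi>" by (rule is_aut_hom[OF aut])
  have px: "\<psi> vx = P"
    by (simp add: \<psi>_def subst_vx[OF ordge_vx oQ1] subst_vx[OF oP ordge_vy])
  have py: "\<psi> vy = Q"
  proof -
    have "\<psi> vy = subst P vy Q1" by (simp add: \<psi>_def subst_vy[OF ordge_vx oQ1])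
    also have "\<dots> = (1 + cst vv * subst P vy vx) * subst P vy vy + cst ee * subst P vy vx"
      unfolding Q1_def by (simp add: hom_simps[OF hT])
    also have "\<dots> = Q" by (simp add: subst_vx[OF oP ordge_vy] subst_vy[OF oP ordge_vy] Q_def)
    finally show ?thesis .
  qed
  define At where "At = \<psi> (of_y (fps_shift 2 A))"
  define bt where "bt = \<psi> (of_y (fps_shift 2 b))"
  define Ct where "Ct = \<psi> (of_y (fps_shift 2 C))"
  have pA: "\<psi> (of_y A) = cst a0 + cst a1 * Q + Q^2 * At"
    by (subst of_y_decomp) (simp add: hom_simps[OF h] py At_def a0_def a1_def)
  have pb: "\<psi> (of_y b) = 1 + cst bb1 * Q + Q^2 * bt"
    by (subst of_y_decomp) (simp add: hom_simps[OF h] py bt_def bb1_def b0 cst_1)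
  have pC: "\<psi> (of_y C) = cst c0 + cst c1 * Q + Q^2 * Ct"
    by (subst of_y_decomp) (simp add: hom_simps[OF h] py Ct_def c0_def c1_def)
  define g1 where "g1 = (vx^3 + of_y A * vx * vy^3 + of_y b * vy^4 :: 'a bips)"
  define g2 where "g2 = (vx^2 * vy + of_y C * vy^4 :: 'a bips)"
  have pg1: "\<psi> g1 = P^3 + (cst a0 + cst a1 * Q + Q^2 * At) * P * Q^3 + (1 + cst bb1 * Q + Q^2 * bt) * Q^4"
    unfolding g1_def by (simp add: hom_simps[OF h] px py pA pb)
  have pg2: "\<psi> g2 = P^2 * Q + (cst c0 + cst c1 * Q + Q^2 * Ct) * Q^4"
    unfolding g2_def by (simp add: hom_simps[OF h] px py pC)
  have oQ2: "ordge 2 (Q^2)" using ordge_power[OF oQ, of 2] by simp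
  have oQ3: "ordge 3 (Q^3)" using ordge_power[OF oQ, of 3] by simp
  have oQ4: "ordge 4 (Q^4)" using ordge_power[OF oQ, of 4] by simp
  have rA: "ordge 6 (Q^2*At*P*Q^3)"
  proof -
    have "ordge 2 (Q^2*At)" by (rule ordge_multR[OF oQ2])
    then have "ordge 3 (Q^2*At*P)" using ordge_mult[OF _ oP] by fastforce
    then show ?thesis using ordge_mult[OF _ oQ3] by fastforce
  qed
  have rb: "ordge 6 (Q^2*bt*Q^4)"
  proof -
    have "ordge 2 (Q^2*bt)" by (rule ordge_multR[OF oQ2])
    then show ?thesis using ordge_mult[OF _ oQ4] by fastforce
  qed
  have rC: "ordge 6 (Q^2*Ct*Q^4)"
  proof -
    have "ordge 2 (Q^2*Ct)" by (rule ordge_multR[OF oQ2])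
    then show ?thesis using ordge_mult[OF _ oQ4] by fastforce
  qed
  have R1: "ordge 6 (Q^2*At*P*Q^3 + Q^2*bt*Q^4)" using rA rb by (rule ordge_add)
  have R2: "ordge 6 (Q^2*Ct*Q^4 - cst ee * (Q^2*At*P*Q^3 + Q^2*bt*Q^4))"
    by (rule ordge_diff[OF rC ordge_multL[OF R1]])
  have E1: "\<exists>\<alpha> \<beta>. in_max \<alpha> \<and> in_max \<beta> \<and> \<psi> g1 = (1 + \<alpha>) * NF1 + \<beta> * NF2 kk"
    apply (rule finish1[OF _ _ _ _ _ R1])
        apply (unfold pg1, rule split1)
       apply (unfold P_def Q_def NF1_def NF2_def, rule slot1_core)
      apply (use arg_cong[OF F13, of cst] in \<open>simp add: cst_simps\<close>)
     apply (use arg_cong[OF F14, of cst] in \<open>simp add: cst_simps\<close>)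
    apply (intro ordge_add ordge_xy; simp)
    done
  have E2: "\<exists>\<alpha> \<beta>. in_max \<alpha> \<and> in_max \<beta> \<and> \<psi> g2 - cst ee * \<psi> g1 = \<alpha> * NF1 + (1 + \<beta>) * NF2 kk"
    apply (rule finish2[OF _ _ _ _ _ _ _ _ _ _ R2])
             apply (unfold pg1 pg2, rule split2)
            apply (unfold P_def Q_def NF1_def NF2_def, rule slot1_core)
           apply (rule slot2_core)
          apply (use arg_cong[OF F13, of cst] in \<open>simp add: cst_simps\<close>)
         apply (use arg_cong[OF F14, of cst] in \<open>simp add: cst_simps\<close>)
        apply (use arg_cong[OF G04, of cst] in \<open>simp add: cst_simps\<close>)
       apply (use arg_cong[OF G13, of cst] in \<open>simp add: cst_simps\<close>)
      apply (use arg_cong[OF G14, of cst] in \<open>simp add: cst_simps\<close>)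
     apply (intro ordge_add ordge_xy; simp)
    apply (intro ordge_add ordge_xy; simp)
    done
  obtain a1' b1' a2' b2' where
    e1: "in_max a1'" "in_max b1'" "\<psi> g1 = (1 + a1') * NF1 + b1' * NF2 kk" and
    e2: "in_max a2'" "in_max b2'" "\<psi> g2 - cst ee * \<psi> g1 = a2' * NF1 + (1 + b2') * NF2 kk"
    using E1 E2 by blast
  have c1: "contact_equiv (g1, g2) (\<psi> g1, \<psi> g2 - cst ee * \<psi> g1)"
    using ce_intro[OF aut, of 1 1 0 "- cst ee" 1 "(g1, g2)"] by simp
  have c2: "contact_equiv (\<psi> g1, \<psi> g2 - cst ee * \<psi> g1) (NF1, NF2 kk)"
    using ce_perturb[OF e1(1,2) e2(1,2), of NF1 "NF2 kk"] e1(3) e2(3) by simp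
  show ?thesis using ce_trans[OF c1 c2] unfolding g1_def g2_def by blast
qed



lemma cst_mult_eq_1:
  assumes "a * b = (1::'a::comm_ring_1)"
  shows "cst a * cst b = (1 :: 'a bips)"
  using assms by (simp add: cst_mult[symmetric] cst_1)

lemma scale_aut:
  fixes p q :: "'a::field"
  assumes "p \<noteq> 0" "q \<noteq> 0"
  shows "is_aut (subst (cst p * vx) (cst q * vy))"
proof -
  have o1: "ordge 1 (cst p * vx :: 'a bips)" by (rule ordge_multL[OF ordge_vx])
  have o2: "ordge 1 (cst q * vy :: 'a bips)" by (rule ordge_multL[OF ordge_vy])
  have o3: "ordge 1 (cst (inverse p) * vx :: 'a bips)" by (rule ordge_multL[OF ordge_vx])
  have o4: "ordge 1 (cst (inverse q) * vy :: 'a bips)" by (rule ordge_multL[OF ordge_vy])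
  have h1: "hom (subst (cst p * vx) (cst q * vy) :: 'a bips \<Rightarrow> _)" by (rule hom_subst[OF o1 o2])
  have h2: "hom (subst (cst (inverse p) * vx) (cst (inverse q) * vy) :: 'a bips \<Rightarrow> _)" by (rule hom_subst[OF o3 o4])
  have ip: "cst (inverse p) * cst p = (1::'a bips)" "cst p * cst (inverse p) = (1::'a bips)"
    using assms by (simp_all add: cst_mult_eq_1)
  have iq: "cst (inverse q) * cst q = (1::'a bips)" "cst q * cst (inverse q) = (1::'a bips)"
    using assms by (simp_all add: cst_mult_eq_1)
  show ?thesis
  proof (rule aut_subst[OF o1 o2 o3 o4])
    show "subst (cst p * vx) (cst q * vy) (cst (inverse p) * vx) = vx"
      using ip by (simp add: hom_simps[OF h1] subst_vx[OF o1 o2] mult.assoc[symmetric])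
    show "subst (cst p * vx) (cst q * vy) (cst (inverse q) * vy) = vy"
      using iq by (simp add: hom_simps[OF h1] subst_vy[OF o1 o2] mult.assoc[symmetric])
    show "subst (cst (inverse p) * vx) (cst (inverse q) * vy) (cst p * vx) = vx"
      using ip by (simp add: hom_simps[OF h2] subst_vx[OF o3 o4] mult.assoc[symmetric])
    show "subst (cst (inverse p) * vx) (cst (inverse q) * vy) (cst q * vy) = vy"
      using iq by (simp add: hom_simps[OF h2] subst_vy[OF o3 o4] mult.assoc[symmetric])
  qed
qed

lemma two_ne_0:
  assumes "CHAR('a::field) = 0 \<or> CHAR('a) > 3"
  shows "(2::'a) \<noteq> 0"
proof
  assume "(2::'a) = 0"
  then have "of_nat 2 = (0::'a)" by simp
  then have "CHAR('a) dvd 2" by (simp only: of_nat_eq_0_iff_char_dvd)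
  then show False using assms by (auto dest: dvd_imp_le)
qed

theorem proposition5p12:
  fixes f :: "'a::alg_closed_field bips \<times> 'a bips"
    and a b c :: "'a fps" and r s t :: nat
  assumes "CHAR('a) = 0 \<or> CHAR('a) > 3"
    and "ICIS f"
    and "r \<ge> 3" and "s \<ge> 4" and "t \<ge> 4"
    and "a $ 0 \<noteq> 0" and "b $ 0 \<noteq> 0" and "c $ 0 \<noteq> 0"
    and "contact_equiv f
           (vx ^ 3 + of_y a * vx * vy ^ r + of_y b * vy ^ s,
            vx ^ 2 * vy + of_y c * vy ^ t)"
    and "s = 4"
  shows "\<exists>lam\<in>{0, 1}. contact_equiv f (vx ^ 3 + vy ^ 4, vx ^ 2 * vy + cst lam * vy ^ 4)"
proof -
  have two: "(2::'a) \<noteq> 0" using two_ne_0[OF assms(1)] .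
  define A where "A = a * fps_X ^ (r - 3)"
  define C where "C = c * fps_X ^ (t - 4)"
  have rA: "of_y a * vx * vy ^ r = of_y A * vx * vy ^ 3"
  proof -
    have "vy ^ r = vy ^ 3 * (vy ^ (r - 3) :: 'a bips)" using assms(3)
      by (metis le_add_diff_inverse power_add)
    then show ?thesis by (simp add: A_def of_y_mult of_y_Xpow mult_ac)
  qed
  have rC: "of_y c * vy ^ t = of_y C * vy ^ 4"
  proof -
    have "vy ^ t = vy ^ 4 * (vy ^ (t - 4) :: 'a bips)" using assms(5)
      by (metis le_add_diff_inverse power_add)
    then show ?thesis by (simp add: C_def of_y_mult of_y_Xpow mult_ac)
  qed
  have ce0: "contact_equiv f (vx ^ 3 + of_y A * vx * vy ^ 3 + of_y b * vy ^ 4, vx ^ 2 * vy + of_y C * vy ^ 4)"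
    using assms(9) unfolding rA rC assms(10) .
  define \<beta>0 where "\<beta>0 = b $ 0"
  have b0: "\<beta>0 \<noteq> 0" using assms(7) by (simp add: \<beta>0_def)
  obtain \<alpha> :: 'a where al: "\<alpha> ^ 3 = \<beta>0" using nth_root_exists[of 3 \<beta>0] by auto
  have al0: "\<alpha> \<noteq> 0" using al b0 by auto
  define A' where "A' = A * fps_const (\<alpha> / \<beta>0)"
  define b' where "b' = b * fps_const (1 / \<beta>0)"
  define C' where "C' = C * fps_const (1 / \<alpha>^2)"
  have b'0: "b' $ 0 = 1" using b0 by (simp add: b'_def \<beta>0_def)
  define \<psi> where "\<psi> = subst (cst \<alpha> * vx) (cst 1 * vy :: 'a bips)"
  have aut: "is_aut \<psi>" unfolding \<psi>_def by (rule scale_aut[OF al0]) simp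
  have o1: "ordge 1 (cst \<alpha> * vx :: 'a bips)" by (rule ordge_multL[OF ordge_vx])
  have psi_eq: "\<psi> = subst (cst \<alpha> * vx) vy" by (simp add: \<psi>_def cst_1)
  have h: "hom \<psi>" using aut by (rule is_aut_hom)
  have px: "\<psi> vx = cst \<alpha> * vx" unfolding psi_eq by (rule subst_vx[OF o1 ordge_vy])
  have py: "\<psi> vy = vy" unfolding psi_eq by (rule subst_vy[OF o1 ordge_vy])
  have pofy: "\<psi> (of_y g) = of_y g" for g unfolding psi_eq by (rule subst_of_y_vy[OF o1])
  have k1: "cst (1/\<beta>0) * cst \<alpha> ^ 3 = (1::'a bips)"
    using al b0 by (simp add: cst_mult[symmetric] cst_power[symmetric] cst_1)
  have k2: "cst (1/\<beta>0) * cst \<alpha> = (cst (\<alpha>/\<beta>0) :: 'a bips)"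
    by (simp add: cst_mult[symmetric])
  have k3: "cst (1/\<alpha>^2) * cst \<alpha> ^ 2 = (1::'a bips)"
    using al0 by (simp add: cst_mult[symmetric] cst_power[symmetric] cst_1)
  have oA': "of_y A' = of_y A * cst (\<alpha>/\<beta>0)" by (simp add: A'_def of_y_mult of_y_const)
  have ob': "of_y b' = of_y b * cst (1/\<beta>0)" by (simp add: b'_def of_y_mult of_y_const)
  have oC': "of_y C' = of_y C * cst (1/\<alpha>^2)" by (simp add: C'_def of_y_mult of_y_const)
  have id1: "cst (1/\<beta>0) * \<psi> (vx ^ 3 + of_y A * vx * vy ^ 3 + of_y b * vy ^ 4) + 0 * \<psi> (vx ^ 2 * vy + of_y C * vy ^ 4)
      = vx ^ 3 + of_y A' * vx * vy ^ 3 + of_y b' * vy ^ 4"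
  proof -
    have "cst (1/\<beta>0) * \<psi> (vx ^ 3 + of_y A * vx * vy ^ 3 + of_y b * vy ^ 4) + 0 * \<psi> (vx ^ 2 * vy + of_y C * vy ^ 4)
        = cst (1/\<beta>0) * ((cst \<alpha> * vx) ^ 3 + of_y A * (cst \<alpha> * vx) * vy ^ 3 + of_y b * vy ^ 4)"
      by (simp add: hom_simps[OF h] px py pofy)
    also have "\<dots> = vx ^ 3 + of_y A' * vx * vy ^ 3 + of_y b' * vy ^ 4"
      unfolding oA' ob' using k1 k2 by algebra
    finally show ?thesis .
  qed
  have id2: "0 * \<psi> (vx ^ 3 + of_y A * vx * vy ^ 3 + of_y b * vy ^ 4) + cst (1/\<alpha>^2) * \<psi> (vx ^ 2 * vy + of_y C * vy ^ 4)
      = vx ^ 2 * vy + of_y C' * vy ^ 4"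
  proof -
    have "0 * \<psi> (vx ^ 3 + of_y A * vx * vy ^ 3 + of_y b * vy ^ 4) + cst (1/\<alpha>^2) * \<psi> (vx ^ 2 * vy + of_y C * vy ^ 4)
        = cst (1/\<alpha>^2) * ((cst \<alpha> * vx) ^ 2 * vy + of_y C * vy ^ 4)"
      by (simp add: hom_simps[OF h] px py pofy)
    also have "\<dots> = vx ^ 2 * vy + of_y C' * vy ^ 4"
      unfolding oC' using k3 by algebra
    finally show ?thesis .
  qed
  have det1: "(cst (1/\<beta>0) * cst (1/\<alpha>^2) - 0 * 0) * cst (\<beta>0 * \<alpha>^2) = (1::'a bips)"
    using b0 al0 by (simp add: cst_mult[symmetric] cst_1)
  have ce1: "contact_equiv (vx ^ 3 + of_y A * vx * vy ^ 3 + of_y b * vy ^ 4, vx ^ 2 * vy + of_y C * vy ^ 4)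
                           (vx ^ 3 + of_y A' * vx * vy ^ 3 + of_y b' * vy ^ 4, vx ^ 2 * vy + of_y C' * vy ^ 4)"
    using ce_intro[OF aut det1, of "(vx ^ 3 + of_y A * vx * vy ^ 3 + of_y b * vy ^ 4, vx ^ 2 * vy + of_y C * vy ^ 4)"]
    unfolding fst_conv snd_conv id1 id2 .
  obtain K where ce2: "contact_equiv (vx ^ 3 + of_y A' * vx * vy ^ 3 + of_y b' * vy ^ 4, vx ^ 2 * vy + of_y C' * vy ^ 4) (NF1, NF2 K)"
    using main_b1[OF b'0 two] by blast
  have ceK: "contact_equiv f (NF1, NF2 K)" using ce_trans[OF ce_trans[OF ce0 ce1] ce2] .
  show ?thesis
  proof (cases "K = 0")
    case True
    then show ?thesis using ceK by (intro bexI[of _ 0]) (simp_all add: NF1_def NF2_def)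
  next
    case False
    define p where "p = 1 / K^4"
    define q where "q = 1 / K^3"
    have p0: "p \<noteq> 0" and q0: "q \<noteq> 0" using False by (simp_all add: p_def q_def)
    define \<chi> where "\<chi> = subst (cst p * vx) (cst q * vy :: 'a bips)"
    have aut2: "is_aut \<chi>" unfolding \<chi>_def by (rule scale_aut[OF p0 q0])
    have h2: "hom \<chi>" using aut2 by (rule is_aut_hom)
    have o1: "ordge 1 (cst p * vx :: 'a bips)" by (rule ordge_multL[OF ordge_vx])
    have o2: "ordge 1 (cst q * vy :: 'a bips)" by (rule ordge_multL[OF ordge_vy])
    have cx: "\<chi> vx = cst p * vx" unfolding \<chi>_def by (rule subst_vx[OF o1 o2])
    have cy: "\<chi> vy = cst q * vy" unfolding \<chi>_def by (rule subst_vy[OF o1 o2])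
    have f1: "cst (K^12) * cst p ^ 3 = (1::'a bips)"
      using False by (simp add: p_def cst_mult[symmetric] cst_power[symmetric] cst_1 field_simps)
    have f2: "cst (K^12) * cst q ^ 4 = (1::'a bips)"
      using False by (simp add: q_def cst_mult[symmetric] cst_power[symmetric] cst_1 field_simps)
    have f3: "cst (K^11) * cst p ^ 2 * cst q = (1::'a bips)"
      using False by (simp add: p_def q_def cst_mult[symmetric] cst_power[symmetric] cst_1 field_simps)
    have K12: "K^11 * K = K^12" by (simp add: power_Suc2[symmetric])
    have f4F: "K^11 * K * q^4 = 1" unfolding K12 q_def using False by (simp add: field_simps)
    have f4: "cst (K^11) * cst K * cst q ^ 4 = (1::'a bips)"
      using arg_cong[OF f4F, of cst] by (simp add: cst_mult cst_power cst_1)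
    have j1: "cst (K^12) * \<chi> NF1 + 0 * \<chi> (NF2 K) = vx ^ 3 + vy ^ 4"
    proof -
      have "cst (K^12) * \<chi> NF1 + 0 * \<chi> (NF2 K) = cst (K^12) * ((cst p * vx) ^ 3 + (cst q * vy) ^ 4)"
        by (simp add: NF1_def hom_simps[OF h2] cx cy)
      also have "\<dots> = vx ^ 3 + vy ^ 4" using f1 f2 by algebra
      finally show ?thesis .
    qed
    have j2: "0 * \<chi> NF1 + cst (K^11) * \<chi> (NF2 K) = vx ^ 2 * vy + cst 1 * vy ^ 4"
    proof -
      have "0 * \<chi> NF1 + cst (K^11) * \<chi> (NF2 K) = cst (K^11) * ((cst p * vx) ^ 2 * (cst q * vy) + cst K * (cst q * vy) ^ 4)"
        by (simp add: NF2_def hom_simps[OF h2] cx cy)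
      also have "\<dots> = vx ^ 2 * vy + cst 1 * vy ^ 4" using f3 f4 by (simp add: cst_1) algebra
      finally show ?thesis .
    qed
    have det2: "(cst (K^12) * cst (K^11) - 0 * 0) * cst (1 / K^23) = (1::'a bips)"
      using False by (simp add: cst_mult[symmetric] cst_1 field_simps power_add[symmetric])
    have ce3: "contact_equiv (NF1, NF2 K) (vx ^ 3 + vy ^ 4, vx ^ 2 * vy + cst 1 * vy ^ 4)"
      using ce_intro[OF aut2 det2, of "(NF1, NF2 K)"] unfolding fst_conv snd_conv j1 j2 .
    show ?thesis using ce_trans[OF ceK ce3] by (intro bexI[of _ 1]) simp_all
  qed
qed


end
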